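(* Under the setup, the window-coverage condition and nonsingular Gram matrix described in the context, and the DDD parallel changes-in-trends assumption, the population coefficient $\alpha_j$ ($j\in\mathcal E$) in the regression $$Y_{i,t}=\alpha_i+\delta_{S_i,t}+\eta_{Q_i,t}+\sum_{e\in\mathcal E}\alpha_eR_e(i,t)+\varepsilon_{i,t}$$ satisfies $$\alpha_j=\sum_{g\in\mathcal G_{\mathrm{trg}}}\sum_{\ell\in\{-L,\dots,K\}\setminus\{-1\}}\omega^{j,\star}_{g,\ell}\,\mathrm{CATT}(g,\ell).$$
   Context: Setup: balanced panel of units $i$ over $t\in\{1,\dots,T\}$; treatment-enabling group $S_i\in\mathcal S\subseteq\{2,\dots,T\}\cup\{\infty\}$; time-invariant eligibility $Q_i\in\{0,1\}$; $\mathcal G_{\mathrm{trg}}=\mathcal S\setminus\{\infty\}$. Potential outcomes $Y_{i,t}(g)$, $g\in\mathcal G_{\mathrm{trg}}$, and $Y_{i,t}(\infty)$, with convention $Y_{i,t}(g)=Y_{i,t}(\infty)$ for $t<g$. Observed outcome: $Y_{i,t}=Y_{i,t}(g)$ if $S_i=g\in\mathcal G_{\mathrm{trg}}$ and $Q_i=1$, and $Y_{i,t}=Y_{i,t}(\infty)$ otherwise. Data i.i.d. across units with finite second moments. $\mathrm{CATT}(g,e)=\mathbb E[Y_{i,g+e}(g)-Y_{i,g+e}(\infty)\mid S_i=g,Q_i=1]$. $\mathcal E=\{-L,\dots,K\}\setminus\{-1\}$; the window covers all event times ($t-g\in\{-L,\dots,K\}$ for all $g\in\mathcal G_{\mathrm{trg}}$,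 $t\in\{1,\dots,T\}$). $R_e(i,t)=\mathbb 1\{t-S_i=e\}Q_i$, $R_{g,\ell}(i,t)=\mathbb 1\{S_i=g,Q_i=1,t=g+\ell\}$. Population coefficients are least-squares projections over units and periods; the Gram matrix of the three-way demeaned (unit, group-by-time, eligibility-by-time) event-time indicators is nonsingular. $\omega^{j,\star}_{g,\ell}$ is the coefficient on $R_j$ in the population regression of $R_{g,\ell}(i,t)$ on $\alpha_i$, $\delta_{S_i,t}$, $\eta_{Q_i,t}$ and $\{R_e\}_{e\in\mathcal E}$. DDD-PCT: for all $g\in\mathcal G_{\mathrm{trg}}$, all $g_c\in\mathcal S$ with $g_c>g$, and all $t\in\{2,\dots,T\}$ with $t\le g_c$, writing $\Delta_t(s,q)=\mathbb E[Y_{i,t}(\infty)-Y_{i,t-1}(\infty)\mid S_i=s,Q_i=q]$, one has $\Delta_t(g,1)-\Delta_t(g,0)=\Delta_t(g_c,1)-\Delta_t(g_c,0)$. *)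

theory Defs
  imports "HOL-Probability.Probability" "HOL-Library.Extended_Nat"
begin

text \<open>One generic unit: a probability space M; S = treatment-enabling group
(enat, with \<infinity> meaning never enabled), Q = eligibility, Yinf = Y(\<infinity>),
Yg g = Y(g). Times are naturals 1..T.\<close>

definition ev_set :: "nat \<Rightarrow> nat \<Rightarrow> int set" where
  "ev_set L K = {- int L .. int K} - {-1}"

definition trg_groups :: "enat set \<Rightarrow> nat set" where
  "trg_groups SS = {g. enat g \<in> SS}"

definition Yobs :: "enat set \<Rightarrow> ('a \<Rightarrow> enat) \<Rightarrow> ('a \<Rightarrow> bool)
    \<Rightarrow> ('a \<Rightarrow> nat \<Rightarrow> real) \<Rightarrow> (nat \<Rightarrow> 'a \<Rightarrow> nat \<Rightarrow> real) \<Rightarrow> 'a \<Rightarrow> nat \<Rightarrow> real" where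
  "Yobs SS S Q Yinf Yg \<omega> t =
     (if (\<exists>g. S \<omega> = enat g \<and> g \<in> trg_groups SS) \<and> Q \<omega>
      then Yg (the_enat (S \<omega>)) \<omega> t else Yinf \<omega> t)"

definition Rev :: "('a \<Rightarrow> enat) \<Rightarrow> ('a \<Rightarrow> bool) \<Rightarrow> int \<Rightarrow> 'a \<Rightarrow> nat \<Rightarrow> real" where
  "Rev S Q e \<omega> t =
     (if (\<exists>g. S \<omega> = enat g \<and> int t - int g = e) \<and> Q \<omega> then 1 else 0)"

definition Rgl :: "('a \<Rightarrow> enat) \<Rightarrow> ('a \<Rightarrow> bool) \<Rightarrow> nat \<Rightarrow> int \<Rightarrow> 'a \<Rightarrow> nat \<Rightarrow> real" where
  "Rgl S Q g l \<omega> t = (if S \<omega> = enat g \<and> Q \<omega> \<and> int t = int g + l then 1 else 0)"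

definition ssr_full :: "'a measure \<Rightarrow> nat \<Rightarrow> int set \<Rightarrow> ('a \<Rightarrow> enat) \<Rightarrow> ('a \<Rightarrow> bool)
    \<Rightarrow> ('a \<Rightarrow> nat \<Rightarrow> real) \<Rightarrow> ('a \<Rightarrow> real) \<Rightarrow> (enat \<Rightarrow> nat \<Rightarrow> real)
    \<Rightarrow> (bool \<Rightarrow> nat \<Rightarrow> real) \<Rightarrow> (int \<Rightarrow> real) \<Rightarrow> ennreal" where
  "ssr_full M T E S Q X A d h b =
     (\<integral>\<^sup>+ \<omega>. ennreal (\<Sum>t\<in>{1..T}. (X \<omega> t - A \<omega> - d (S \<omega>) t - h (Q \<omega>) t
                   - (\<Sum>e\<in>E. b e * Rev S Q e \<omega> t))\<^sup>2) \<partial>M)"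

definition pop_coef :: "'a measure \<Rightarrow> nat \<Rightarrow> int set \<Rightarrow> ('a \<Rightarrow> enat) \<Rightarrow> ('a \<Rightarrow> bool)
    \<Rightarrow> ('a \<Rightarrow> nat \<Rightarrow> real) \<Rightarrow> (int \<Rightarrow> real) \<Rightarrow> bool" where
  "pop_coef M T E S Q X b \<longleftrightarrow>
     (\<exists>A d h. A \<in> borel_measurable M \<and>
        (\<forall>A' d' h' b'. A' \<in> borel_measurable M \<longrightarrow>
           ssr_full M T E S Q X A d h b \<le> ssr_full M T E S Q X A' d' h' b'))"

definition fe_fit :: "'a measure \<Rightarrow> nat \<Rightarrow> ('a \<Rightarrow> enat) \<Rightarrow> ('a \<Rightarrow> bool)
    \<Rightarrow> ('a \<Rightarrow> nat \<Rightarrow> real) \<Rightarrow> ('a \<Rightarrow> nat \<Rightarrow> real) \<Rightarrow> bool" where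
  "fe_fit M T S Q X F \<longleftrightarrow>
     (\<exists>A d h. A \<in> borel_measurable M \<and>
        (\<forall>\<omega> t. F \<omega> t = A \<omega> + d (S \<omega>) t + h (Q \<omega>) t) \<and>
        (\<forall>A' d' h'. A' \<in> borel_measurable M \<longrightarrow>
           (\<integral>\<^sup>+ \<omega>. ennreal (\<Sum>t\<in>{1..T}. (X \<omega> t - F \<omega> t)\<^sup>2) \<partial>M)
           \<le> (\<integral>\<^sup>+ \<omega>. ennreal (\<Sum>t\<in>{1..T}. (X \<omega> t - A' \<omega> - d' (S \<omega>) t - h' (Q \<omega>) t)\<^sup>2) \<partial>M)))"

definition nonsingular_on :: "'i set \<Rightarrow> ('i \<Rightarrow> 'i \<Rightarrow> real) \<Rightarrow> bool" where
  "nonsingular_on I G \<longleftrightarrow>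
     (\<forall>c. (\<forall>i\<in>I. (\<Sum>j\<in>I. G i j * c j) = 0) \<longrightarrow> (\<forall>i\<in>I. c i = 0))"

definition cond_mean :: "'a measure \<Rightarrow> ('a \<Rightarrow> bool) \<Rightarrow> ('a \<Rightarrow> real) \<Rightarrow> real" where
  "cond_mean M P Z = (\<integral>\<omega>. indicator {\<omega>. P \<omega>} \<omega> * Z \<omega> \<partial>M) / measure M {\<omega>\<in>space M. P \<omega>}"

definition CATT :: "'a measure \<Rightarrow> ('a \<Rightarrow> enat) \<Rightarrow> ('a \<Rightarrow> bool)
    \<Rightarrow> ('a \<Rightarrow> nat \<Rightarrow> real) \<Rightarrow> (nat \<Rightarrow> 'a \<Rightarrow> nat \<Rightarrow> real) \<Rightarrow> nat \<Rightarrow> int \<Rightarrow> real" where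
  "CATT M S Q Yinf Yg g e =
     cond_mean M (\<lambda>\<omega>. S \<omega> = enat g \<and> Q \<omega>)
       (\<lambda>\<omega>. Yg g \<omega> (nat (int g + e)) - Yinf \<omega> (nat (int g + e)))"

definition Dtrend :: "'a measure \<Rightarrow> ('a \<Rightarrow> enat) \<Rightarrow> ('a \<Rightarrow> bool)
    \<Rightarrow> ('a \<Rightarrow> nat \<Rightarrow> real) \<Rightarrow> nat \<Rightarrow> enat \<Rightarrow> bool \<Rightarrow> real" where
  "Dtrend M S Q Yinf t s q =
     cond_mean M (\<lambda>\<omega>. S \<omega> = s \<and> Q \<omega> = q) (\<lambda>\<omega>. Yinf \<omega> t - Yinf \<omega> (t - 1))"

end

theory Submission
  imports Defs
begin

lemma int_bdd_mult:
  fixes f g :: "'a \<Rightarrow> real"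
  assumes "integrable M f" "g \<in> borel_measurable M" "\<And>\<omega>. \<omega> \<in> space M \<Longrightarrow> \<bar>g \<omega>\<bar> \<le> B"
  shows "integrable M (\<lambda>\<omega>. g \<omega> * f \<omega>)"
proof (rule Bochner_Integration.integrable_bound[where f="\<lambda>\<omega>. \<bar>B\<bar> * f \<omega>"])
  show "integrable M (\<lambda>\<omega>. \<bar>B\<bar> * f \<omega>)" using assms(1) by simp
  show "(\<lambda>\<omega>. g \<omega> * f \<omega>) \<in> borel_measurable M" using assms by measurable
  show "AE x in M. norm (g x * f x) \<le> norm (\<bar>B\<bar> * f x)"
  proof (rule AE_I2)
    fix x assume "x \<in> space M"
    then have "\<bar>g x\<bar> \<le> \<bar>B\<bar>" using assms(3) by force
    then show "norm (g x * f x) \<le> norm (\<bar>B\<bar> * f x)"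
      by (simp add: abs_mult mult_right_mono)
  qed
qed

lemma quad_zero:
  fixes a b :: real
  assumes "b \<ge> 0" "\<And>\<epsilon>. 0 \<le> \<epsilon>\<^sup>2 * b - 2 * \<epsilon> * a"
  shows "a = 0"
proof -
  have b1: "b + 1 > 0" using assms(1) by simp
  define e where "e = a/(b+1)"
  have "0 \<le> e\<^sup>2 * b - 2 * e * a" using assms(2) .
  also have "e\<^sup>2 * b - 2 * e * a = - (a\<^sup>2 * (b + 2)) / (b+1)\<^sup>2" unfolding e_def using b1
    by (simp add: divide_simps power2_eq_square) (simp add: algebra_simps)
  finally have "0 \<le> - (a\<^sup>2 * (b + 2)) / (b+1)\<^sup>2" .
  then have "0 \<le> (- (a\<^sup>2 * (b + 2)) / (b+1)\<^sup>2) * (b+1)\<^sup>2"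
    by (intro mult_nonneg_nonneg) auto
  then have "a\<^sup>2 * (b + 2) \<le> 0" using b1 by simp
  then have "a\<^sup>2 \<le> 0" using assms(1)
    by (smt (verit) mult_nonneg_nonneg zero_le_power2 mult_pos_pos zero_less_power2)
  then show ?thesis by simp
qed

lemma (in finite_measure) VL:
  fixes Z v :: "'a \<Rightarrow> nat \<Rightarrow> real" and I :: "nat set"
  assumes fin: "finite I"
    and Zm: "\<And>t. t\<in>I \<Longrightarrow> (\<lambda>\<omega>. Z \<omega> t) \<in> borel_measurable M"
    and Z2: "\<And>t. t\<in>I \<Longrightarrow> integrable M (\<lambda>\<omega>. (Z \<omega> t)\<^sup>2)"
    and vm: "\<And>t. t\<in>I \<Longrightarrow> (\<lambda>\<omega>. v \<omega> t) \<in> borel_measurable M"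
    and vb: "\<And>t. t\<in>I \<Longrightarrow> \<exists>B. \<forall>\<omega>\<in>space M. \<bar>v \<omega> t\<bar> \<le> B"
    and min: "\<And>\<epsilon>. (\<integral>\<^sup>+\<omega>. ennreal (\<Sum>t\<in>I. (Z \<omega> t)\<^sup>2) \<partial>M)
              \<le> (\<integral>\<^sup>+\<omega>. ennreal (\<Sum>t\<in>I. (Z \<omega> t - \<epsilon> * v \<omega> t)\<^sup>2) \<partial>M)"
  shows "(\<integral>\<omega>. (\<Sum>t\<in>I. Z \<omega> t * v \<omega> t) \<partial>M) = 0"
proof -
  have Zi: "integrable M (\<lambda>\<omega>. Z \<omega> t)" if tI: "t \<in> I" for t
    using square_integrable_imp_integrable[OF Zm[OF tI] Z2[OF tI]] .
  have vi: "integrable M (\<lambda>\<omega>. v \<omega> t)" if tI: "t \<in> I" for t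
  proof -
    obtain B where "\<forall>\<omega>\<in>space M. \<bar>v \<omega> t\<bar> \<le> B" using vb[OF tI] by blast
    then show ?thesis using int_bdd_mult[of M "\<lambda>_. 1" "\<lambda>\<omega>. v \<omega> t" B] vm[OF tI] by simp
  qed
  have Zv: "integrable M (\<lambda>\<omega>. Z \<omega> t * v \<omega> t)" if tI: "t \<in> I" for t
  proof -
    obtain B where "\<forall>\<omega>\<in>space M. \<bar>v \<omega> t\<bar> \<le> B" using vb[OF tI] by blast
    then show ?thesis using int_bdd_mult[OF Zi[OF tI] vm[OF tI], of B] by (simp add: mult.commute)
  qed
  have v2: "integrable M (\<lambda>\<omega>. (v \<omega> t)\<^sup>2)" if tI: "t \<in> I" for t
  proof -
    obtain B where "\<forall>\<omega>\<in>space M. \<bar>v \<omega> t\<bar> \<le> B" using vb[OF tI] by blast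
    then show ?thesis using int_bdd_mult[OF vi[OF tI] vm[OF tI], of B] by (simp add: power2_eq_square)
  qed
  define a where "a = (\<integral>\<omega>. (\<Sum>t\<in>I. Z \<omega> t * v \<omega> t) \<partial>M)"
  define b where "b = (\<integral>\<omega>. (\<Sum>t\<in>I. (v \<omega> t)\<^sup>2) \<partial>M)"
  define c where "c = (\<integral>\<omega>. (\<Sum>t\<in>I. (Z \<omega> t)\<^sup>2) \<partial>M)"
  have iZv: "integrable M (\<lambda>\<omega>. \<Sum>t\<in>I. Z \<omega> t * v \<omega> t)" using Zv by auto
  have iv2: "integrable M (\<lambda>\<omega>. \<Sum>t\<in>I. (v \<omega> t)\<^sup>2)" using v2 by auto
  have iZ2: "integrable M (\<lambda>\<omega>. \<Sum>t\<in>I. (Z \<omega> t)\<^sup>2)" using Z2 by auto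
  have b0: "b \<ge> 0" unfolding b_def by (intro integral_nonneg_AE) (auto intro!: sum_nonneg)
  have c0: "c \<ge> 0" unfolding c_def by (intro integral_nonneg_AE) (auto intro!: sum_nonneg)
  have key: "0 \<le> \<epsilon>\<^sup>2 * b - 2 * \<epsilon> * a" for \<epsilon>
  proof -
    have eq: "(\<Sum>t\<in>I. (Z \<omega> t - \<epsilon> * v \<omega> t)\<^sup>2) =
       (\<Sum>t\<in>I. (Z \<omega> t)\<^sup>2) - 2 * \<epsilon> * (\<Sum>t\<in>I. Z \<omega> t * v \<omega> t) + \<epsilon>\<^sup>2 * (\<Sum>t\<in>I. (v \<omega> t)\<^sup>2)" for \<omega>
      by (simp add: power2_diff sum.distrib sum_subtractf sum_distrib_left algebra_simps power2_eq_square)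
    have ii: "integrable M (\<lambda>\<omega>. (\<Sum>t\<in>I. (Z \<omega> t)\<^sup>2) - 2 * \<epsilon> * (\<Sum>t\<in>I. Z \<omega> t * v \<omega> t) + \<epsilon>\<^sup>2 * (\<Sum>t\<in>I. (v \<omega> t)\<^sup>2))"
      using iZv iv2 iZ2 by auto
    have int: "(\<integral>\<omega>. (\<Sum>t\<in>I. (Z \<omega> t)\<^sup>2) - 2 * \<epsilon> * (\<Sum>t\<in>I. Z \<omega> t * v \<omega> t) + \<epsilon>\<^sup>2 * (\<Sum>t\<in>I. (v \<omega> t)\<^sup>2) \<partial>M)
        = c - 2 * \<epsilon> * a + \<epsilon>\<^sup>2 * b"
      unfolding a_def b_def c_def using iZv iv2 iZ2
      by (simp add: integral_add integral_diff)
    have nn: "(\<integral>\<^sup>+\<omega>. ennreal (\<Sum>t\<in>I. (Z \<omega> t - \<epsilon> * v \<omega> t)\<^sup>2) \<partial>M) = ennreal (c - 2 * \<epsilon> * a + \<epsilon>\<^sup>2 * b)"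
      unfolding eq using ii int
      by (subst nn_integral_eq_integral) (auto simp flip: eq intro!: sum_nonneg)
    have nn0: "(\<integral>\<^sup>+\<omega>. ennreal (\<Sum>t\<in>I. (Z \<omega> t)\<^sup>2) \<partial>M) = ennreal c"
      unfolding c_def using iZ2
      by (subst nn_integral_eq_integral) (auto intro!: sum_nonneg)
    have ge: "c - 2 * \<epsilon> * a + \<epsilon>\<^sup>2 * b \<ge> 0"
      using int[symmetric] by (simp add: eq[symmetric] integral_nonneg_AE sum_nonneg)
    from min[of \<epsilon>] have "ennreal c \<le> ennreal (c - 2 * \<epsilon> * a + \<epsilon>\<^sup>2 * b)"
      using nn nn0 by simp
    then have "c \<le> c - 2 * \<epsilon> * a + \<epsilon>\<^sup>2 * b" using ge ennreal_le_iff by blast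
    then show ?thesis by simp
  qed
  show ?thesis using quad_zero[OF b0 key] unfolding a_def .
qed

definition revc :: "int \<Rightarrow> enat \<Rightarrow> bool \<Rightarrow> nat \<Rightarrow> real" where
  "revc e s q t = (if (\<exists>g. s = enat g \<and> int t - int g = e) \<and> q then 1 else 0)"

lemma Rev_revc: "Rev S Q e \<omega> t = revc e (S \<omega>) (Q \<omega>) t"
  by (simp add: Rev_def revc_def)

definition rhoF :: "nat \<Rightarrow> (enat \<Rightarrow> bool \<Rightarrow> nat \<Rightarrow> real) \<Rightarrow> enat \<Rightarrow> bool \<Rightarrow> nat \<Rightarrow> real" where
  "rhoF T u s q t = u s q t - (\<Sum>t'\<in>{1..T}. u s q t') / real T"

lemma rhoF_sum: "(\<Sum>t\<in>{1..T}. rhoF T u s q t) = 0"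
  by (cases "T = 0") (simp_all add: rhoF_def sum_subtractf)

locale ddd = prob_space M for M :: "'a measure" +
  fixes T :: nat and SS :: "enat set" and S :: "'a \<Rightarrow> enat" and Q :: "'a \<Rightarrow> bool"
  assumes finSS: "finite SS"
    and S_meas[measurable]: "S \<in> measurable M (count_space UNIV)"
    and Q_meas[measurable]: "Q \<in> measurable M (count_space UNIV)"
    and S_range: "\<forall>\<omega>\<in>space M. S \<omega> \<in> SS"
begin

definition cell :: "enat \<Rightarrow> bool \<Rightarrow> 'a set" where
  "cell s q = {\<omega>\<in>space M. S \<omega> = s \<and> Q \<omega> = q}"

definition p :: "enat \<Rightarrow> bool \<Rightarrow> real" where
  "p s q = measure M (cell s q)"

lemma cell_sets[measurable]: "cell s q \<in> sets M"
  unfolding cell_def by measurable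

lemma cell_rep:
  fixes f :: "enat \<Rightarrow> bool \<Rightarrow> real"
  assumes "\<omega> \<in> space M"
  shows "f (S \<omega>) (Q \<omega>) = (\<Sum>s\<in>SS. \<Sum>q\<in>UNIV. f s q * indicator (cell s q) \<omega>)"
proof -
  have inS: "S \<omega> \<in> SS" using S_range assms by blast
  have "(\<Sum>q\<in>UNIV. f s q * indicator (cell s q) \<omega>) = (if s = S \<omega> then f s (Q \<omega>) else 0)" for s
    using assms by (cases "Q \<omega>") (auto simp: indicator_def UNIV_bool cell_def)
  then have "(\<Sum>s\<in>SS. \<Sum>q\<in>UNIV. f s q * indicator (cell s q) \<omega>) = (\<Sum>s\<in>SS. if s = S \<omega> then f s (Q \<omega>) else 0)"
    by simp
  also have "\<dots> = f (S \<omega>) (Q \<omega>)" using inS finSS by (simp add: sum.delta')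
  finally show ?thesis by simp
qed

lemma cellfun_meas[measurable]: "(\<lambda>\<omega>. f (S \<omega>) (Q \<omega>) :: real) \<in> borel_measurable M"
proof -
  have "(\<lambda>\<omega>. (\<Sum>s\<in>SS. \<Sum>q\<in>UNIV. f s q * indicator (cell s q) \<omega>)) \<in> borel_measurable M"
    by measurable
  then show ?thesis by (rule measurable_cong[THEN iffD1, rotated]) (simp add: cell_rep)
qed

lemma cellfun_bdd: "\<forall>\<omega>\<in>space M. \<bar>f (S \<omega>) (Q \<omega>) :: real\<bar> \<le> (\<Sum>s\<in>SS. \<Sum>q\<in>UNIV. \<bar>f s q\<bar>)"
proof
  fix \<omega> assume w: "\<omega> \<in> space M"
  have inS: "S \<omega> \<in> SS" using S_range w by blast
  have "\<bar>f (S \<omega>) (Q \<omega>)\<bar> \<le> (\<Sum>q\<in>UNIV. \<bar>f (S \<omega>) q\<bar>)"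
    by (rule member_le_sum) auto
  also have "\<dots> \<le> (\<Sum>s\<in>SS. \<Sum>q\<in>UNIV. \<bar>f s q\<bar>)"
    by (rule member_le_sum[OF inS]) (auto intro: sum_nonneg finSS)
  finally show "\<bar>f (S \<omega>) (Q \<omega>)\<bar> \<le> (\<Sum>s\<in>SS. \<Sum>q\<in>UNIV. \<bar>f s q\<bar>)" .
qed

lemma cellfun_bdd_ex: "\<exists>B. \<forall>\<omega>\<in>space M. \<bar>f (S \<omega>) (Q \<omega>) :: real\<bar> \<le> B"
  using cellfun_bdd by blast

lemma cell_int_mult:
  fixes X :: "'a \<Rightarrow> real"
  assumes "integrable M X"
  shows "integrable M (\<lambda>\<omega>. indicator (cell s q) \<omega> * X \<omega>)"
  using integrable_mult_indicator[OF cell_sets assms] by simp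

lemma cellfun_integrable:
  fixes X :: "'a \<Rightarrow> real" and f :: "enat \<Rightarrow> bool \<Rightarrow> real"
  assumes "integrable M X"
  shows "integrable M (\<lambda>\<omega>. f (S \<omega>) (Q \<omega>) * X \<omega>)"
  using int_bdd_mult[OF assms cellfun_meas cellfun_bdd[rule_format]] .

lemma cellfun_integral:
  fixes X :: "'a \<Rightarrow> real" and f :: "enat \<Rightarrow> bool \<Rightarrow> real"
  assumes X: "integrable M X"
  shows "(\<integral>\<omega>. f (S \<omega>) (Q \<omega>) * X \<omega> \<partial>M) =
     (\<Sum>s\<in>SS. \<Sum>q\<in>UNIV. f s q * (\<integral>\<omega>. indicator (cell s q) \<omega> * X \<omega> \<partial>M))"
proof -
  have "(\<integral>\<omega>. f (S \<omega>) (Q \<omega>) * X \<omega> \<partial>M) =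
     (\<integral>\<omega>. (\<Sum>s\<in>SS. \<Sum>q\<in>UNIV. f s q * (indicator (cell s q) \<omega> * X \<omega>)) \<partial>M)"
  proof (rule Bochner_Integration.integral_cong[OF refl])
    fix x assume x: "x \<in> space M"
    show "f (S x) (Q x) * X x = (\<Sum>s\<in>SS. \<Sum>q\<in>UNIV. f s q * (indicator (cell s q) x * X x))"
      unfolding cell_rep[OF x, of f] by (simp only: sum_distrib_right mult.assoc)
  qed
  also have "\<dots> = (\<Sum>s\<in>SS. \<Sum>q\<in>UNIV. f s q * (\<integral>\<omega>. indicator (cell s q) \<omega> * X \<omega> \<partial>M))"
    using cell_int_mult[OF X] by (simp add: integral_sum)
  finally show ?thesis .
qed

lemma cellfun_integral1:
  fixes f :: "enat \<Rightarrow> bool \<Rightarrow> real"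
  shows "(\<integral>\<omega>. f (S \<omega>) (Q \<omega>) \<partial>M) = (\<Sum>s\<in>SS. \<Sum>q\<in>UNIV. f s q * p s q)"
  using cellfun_integral[of "\<lambda>_. 1" f] by (simp add: p_def)

end


lemma (in finite_measure) L2_sub_bdd:
  fixes X c :: "'a \<Rightarrow> real"
  assumes "X \<in> borel_measurable M" "integrable M (\<lambda>\<omega>. (X \<omega>)\<^sup>2)"
    "c \<in> borel_measurable M" "\<forall>\<omega>\<in>space M. \<bar>c \<omega>\<bar> \<le> B"
  shows "integrable M (\<lambda>\<omega>. (X \<omega> - c \<omega>)\<^sup>2)"
proof -
  have Xi: "integrable M X" using square_integrable_imp_integrable assms by blast
  have ci: "integrable M c" using int_bdd_mult[of M "\<lambda>_. 1" c B] assms by simp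
  have i1: "integrable M (\<lambda>\<omega>. c \<omega> * X \<omega>)" using int_bdd_mult[OF Xi assms(3)] assms(4) by blast
  have i2: "integrable M (\<lambda>\<omega>. c \<omega> * c \<omega>)" using int_bdd_mult[OF ci assms(3)] assms(4) by blast
  have "integrable M (\<lambda>\<omega>. (X \<omega>)\<^sup>2 - 2 * (c \<omega> * X \<omega>) + c \<omega> * c \<omega>)"
    using i1 i2 assms(2) by auto
  then show ?thesis by (simp add: power2_diff power2_eq_square algebra_simps)
qed

locale ddd_fit = ddd +
  fixes X :: "'a \<Rightarrow> nat \<Rightarrow> real" and A :: "'a \<Rightarrow> real" and d :: "enat \<Rightarrow> nat \<Rightarrow> real"
    and h :: "bool \<Rightarrow> nat \<Rightarrow> real" and w :: "enat \<Rightarrow> bool \<Rightarrow> nat \<Rightarrow> real"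
  assumes Xm: "\<And>t. t \<in> {1..T} \<Longrightarrow> (\<lambda>\<omega>. X \<omega> t) \<in> borel_measurable M"
    and X2: "\<And>t. t \<in> {1..T} \<Longrightarrow> integrable M (\<lambda>\<omega>. (X \<omega> t)\<^sup>2)"
    and Am[measurable]: "A \<in> borel_measurable M"
    and min: "\<And>A' d' h'. A' \<in> borel_measurable M \<Longrightarrow>
      (\<integral>\<^sup>+\<omega>. ennreal (\<Sum>t\<in>{1..T}. (X \<omega> t - A \<omega> - d (S \<omega>) t - h (Q \<omega>) t - w (S \<omega>) (Q \<omega>) t)\<^sup>2) \<partial>M)
      \<le> (\<integral>\<^sup>+\<omega>. ennreal (\<Sum>t\<in>{1..T}. (X \<omega> t - A' \<omega> - d' (S \<omega>) t - h' (Q \<omega>) t - w (S \<omega>) (Q \<omega>) t)\<^sup>2) \<partial>M)"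
begin

definition Z :: "'a \<Rightarrow> nat \<Rightarrow> real" where
  "Z \<omega> t = X \<omega> t - A \<omega> - d (S \<omega>) t - h (Q \<omega>) t - w (S \<omega>) (Q \<omega>) t"

lemma dm: "(\<lambda>\<omega>. d (S \<omega>) t) \<in> borel_measurable M"
  using cellfun_meas[of "\<lambda>s q. d s t"] by simp
lemma hm: "(\<lambda>\<omega>. h (Q \<omega>) t) \<in> borel_measurable M"
  using cellfun_meas[of "\<lambda>s q. h q t"] by simp
lemma wm: "(\<lambda>\<omega>. w (S \<omega>) (Q \<omega>) t) \<in> borel_measurable M"
  using cellfun_meas[of "\<lambda>s q. w s q t"] by simp

lemma Zm: "t \<in> {1..T} \<Longrightarrow> (\<lambda>\<omega>. Z \<omega> t) \<in> borel_measurable M"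
  unfolding Z_def using Xm dm hm wm Am by measurable

lemma ssr_fin: "(\<integral>\<^sup>+\<omega>. ennreal (\<Sum>t\<in>{1..T}. (Z \<omega> t)\<^sup>2) \<partial>M) < \<infinity>"
proof -
  have i: "integrable M (\<lambda>\<omega>. (X \<omega> t - w (S \<omega>) (Q \<omega>) t)\<^sup>2)" if "t \<in> {1..T}" for t
    using L2_sub_bdd[OF Xm[OF that] X2[OF that] wm] cellfun_bdd[of "\<lambda>s q. w s q t"] by blast
  then have ii: "integrable M (\<lambda>\<omega>. \<Sum>t\<in>{1..T}. (X \<omega> t - w (S \<omega>) (Q \<omega>) t)\<^sup>2)" by auto
  have "(\<integral>\<^sup>+\<omega>. ennreal (\<Sum>t\<in>{1..T}. (Z \<omega> t)\<^sup>2) \<partial>M)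
     \<le> (\<integral>\<^sup>+\<omega>. ennreal (\<Sum>t\<in>{1..T}. (X \<omega> t - (\<lambda>_. 0) \<omega> - (\<lambda>_ _. 0) (S \<omega>) t - (\<lambda>_ _. 0) (Q \<omega>) t - w (S \<omega>) (Q \<omega>) t)\<^sup>2) \<partial>M)"
    unfolding Z_def by (rule min) simp
  also have "\<dots> = ennreal (\<integral>\<omega>. (\<Sum>t\<in>{1..T}. (X \<omega> t - w (S \<omega>) (Q \<omega>) t)\<^sup>2) \<partial>M)"
    using ii by (simp add: nn_integral_eq_integral sum_nonneg)
  also have "\<dots> < \<infinity>" by simp
  finally show ?thesis .
qed

lemma Z2: "t \<in> {1..T} \<Longrightarrow> integrable M (\<lambda>\<omega>. (Z \<omega> t)\<^sup>2)"
proof (rule integrableI_nonneg)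
  assume t: "t \<in> {1..T}"
  show "(\<lambda>\<omega>. (Z \<omega> t)\<^sup>2) \<in> borel_measurable M" using Zm[OF t] by measurable
  show "AE x in M. 0 \<le> (Z x t)\<^sup>2" by simp
  have "(\<integral>\<^sup>+\<omega>. ennreal ((Z \<omega> t)\<^sup>2) \<partial>M) \<le> (\<integral>\<^sup>+\<omega>. ennreal (\<Sum>t\<in>{1..T}. (Z \<omega> t)\<^sup>2) \<partial>M)"
    by (intro nn_integral_mono ennreal_leI member_le_sum t) auto
  then show "(\<integral>\<^sup>+\<omega>. ennreal ((Z \<omega> t)\<^sup>2) \<partial>M) < \<infinity>" using ssr_fin by (meson le_less_trans)
qed

lemma Zi: "t \<in> {1..T} \<Longrightarrow> integrable M (\<lambda>\<omega>. Z \<omega> t)"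
  using square_integrable_imp_integrable[OF Zm Z2] .

lemma orth_d: "(\<integral>\<omega>. (\<Sum>t\<in>{1..T}. \<delta> (S \<omega>) t * Z \<omega> t) \<partial>M) = 0"
proof -
  have "(\<integral>\<omega>. (\<Sum>t\<in>{1..T}. Z \<omega> t * \<delta> (S \<omega>) t) \<partial>M) = 0"
  proof (rule VL[where v="\<lambda>\<omega> t. \<delta> (S \<omega>) t"])
    show "finite {1..T}" by simp
    show "\<And>t. t \<in> {1..T} \<Longrightarrow> (\<lambda>\<omega>. Z \<omega> t) \<in> borel_measurable M" using Zm .
    show "\<And>t. t \<in> {1..T} \<Longrightarrow> integrable M (\<lambda>\<omega>. (Z \<omega> t)\<^sup>2)" using Z2 .
    show "\<And>t. t \<in> {1..T} \<Longrightarrow> (\<lambda>\<omega>. \<delta> (S \<omega>) t) \<in> borel_measurable M"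
      using cellfun_meas[of "\<lambda>s q. \<delta> s t" for t] by simp
    show "\<And>t. t \<in> {1..T} \<Longrightarrow> \<exists>B. \<forall>\<omega>\<in>space M. \<bar>\<delta> (S \<omega>) t\<bar> \<le> B"
      using cellfun_bdd_ex[of "\<lambda>s q. \<delta> s t" for t] by simp
    fix \<epsilon> :: real
    have "(\<lambda>\<omega>. ennreal (\<Sum>t\<in>{1..T}. (Z \<omega> t - \<epsilon> * \<delta> (S \<omega>) t)\<^sup>2)) =
      (\<lambda>\<omega>. ennreal (\<Sum>t\<in>{1..T}. (X \<omega> t - A \<omega> - (\<lambda>s t. d s t + \<epsilon> * \<delta> s t) (S \<omega>) t - h (Q \<omega>) t - w (S \<omega>) (Q \<omega>) t)\<^sup>2))"
      by (simp add: Z_def algebra_simps)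
    then show "(\<integral>\<^sup>+\<omega>. ennreal (\<Sum>t\<in>{1..T}. (Z \<omega> t)\<^sup>2) \<partial>M) \<le> (\<integral>\<^sup>+\<omega>. ennreal (\<Sum>t\<in>{1..T}. (Z \<omega> t - \<epsilon> * \<delta> (S \<omega>) t)\<^sup>2) \<partial>M)"
      unfolding Z_def using min[OF Am] by simp
  qed
  then show ?thesis by (simp add: mult.commute)
qed


lemma orth_h: "(\<integral>\<omega>. (\<Sum>t\<in>{1..T}. \<eta> (Q \<omega>) t * Z \<omega> t) \<partial>M) = 0"
proof -
  have "(\<integral>\<omega>. (\<Sum>t\<in>{1..T}. Z \<omega> t * \<eta> (Q \<omega>) t) \<partial>M) = 0"
  proof (rule VL[where v="\<lambda>\<omega> t. \<eta> (Q \<omega>) t"])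
    show "finite {1..T}" by simp
    show "\<And>t. t \<in> {1..T} \<Longrightarrow> (\<lambda>\<omega>. Z \<omega> t) \<in> borel_measurable M" using Zm .
    show "\<And>t. t \<in> {1..T} \<Longrightarrow> integrable M (\<lambda>\<omega>. (Z \<omega> t)\<^sup>2)" using Z2 .
    show "\<And>t. t \<in> {1..T} \<Longrightarrow> (\<lambda>\<omega>. \<eta> (Q \<omega>) t) \<in> borel_measurable M"
      using cellfun_meas[of "\<lambda>s q. \<eta> q t" for t] by simp
    show "\<And>t. t \<in> {1..T} \<Longrightarrow> \<exists>B. \<forall>\<omega>\<in>space M. \<bar>\<eta> (Q \<omega>) t\<bar> \<le> B"
      using cellfun_bdd_ex[of "\<lambda>s q. \<eta> q t" for t] by simp
    fix \<epsilon> :: real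
    have "(\<lambda>\<omega>. ennreal (\<Sum>t\<in>{1..T}. (Z \<omega> t - \<epsilon> * \<eta> (Q \<omega>) t)\<^sup>2)) =
      (\<lambda>\<omega>. ennreal (\<Sum>t\<in>{1..T}. (X \<omega> t - A \<omega> - d (S \<omega>) t - (\<lambda>q t. h q t + \<epsilon> * \<eta> q t) (Q \<omega>) t - w (S \<omega>) (Q \<omega>) t)\<^sup>2))"
      by (simp add: Z_def algebra_simps)
    then show "(\<integral>\<^sup>+\<omega>. ennreal (\<Sum>t\<in>{1..T}. (Z \<omega> t)\<^sup>2) \<partial>M) \<le> (\<integral>\<^sup>+\<omega>. ennreal (\<Sum>t\<in>{1..T}. (Z \<omega> t - \<epsilon> * \<eta> (Q \<omega>) t)\<^sup>2) \<partial>M)"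
      unfolding Z_def using min[OF Am] by simp
  qed
  then show ?thesis by (simp add: mult.commute)
qed

lemma orth_A:
  assumes Bm: "B \<in> borel_measurable M" and Bb: "\<forall>\<omega>\<in>space M. \<bar>B \<omega>\<bar> \<le> c"
  shows "(\<integral>\<omega>. (\<Sum>t\<in>{1..T}. Z \<omega> t * B \<omega>) \<partial>M) = 0"
proof (rule VL[where v="\<lambda>\<omega> t. B \<omega>"])
  show "finite {1..T}" by simp
  show "\<And>t. t \<in> {1..T} \<Longrightarrow> (\<lambda>\<omega>. Z \<omega> t) \<in> borel_measurable M" using Zm .
  show "\<And>t. t \<in> {1..T} \<Longrightarrow> integrable M (\<lambda>\<omega>. (Z \<omega> t)\<^sup>2)" using Z2 .
  show "\<And>t. t \<in> {1..T} \<Longrightarrow> B \<in> borel_measurable M" using Bm .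
  show "\<And>t. t \<in> {1..T} \<Longrightarrow> \<exists>B'. \<forall>\<omega>\<in>space M. \<bar>B \<omega>\<bar> \<le> B'" using Bb by blast
  fix \<epsilon> :: real
  define A' where "A' = (\<lambda>\<omega>. A \<omega> + \<epsilon> * B \<omega>)"
  have Am': "A' \<in> borel_measurable M"
    unfolding A'_def by (rule borel_measurable_add[OF Am borel_measurable_times[OF borel_measurable_const Bm]])
  have pw: "X \<omega> t - A' \<omega> - d (S \<omega>) t - h (Q \<omega>) t - w (S \<omega>) (Q \<omega>) t = Z \<omega> t - \<epsilon> * B \<omega>" for \<omega> t
    unfolding Z_def A'_def by simp
  have "(\<integral>\<^sup>+\<omega>. ennreal (\<Sum>t\<in>{1..T}. (Z \<omega> t)\<^sup>2) \<partial>M)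
      \<le> (\<integral>\<^sup>+\<omega>. ennreal (\<Sum>t\<in>{1..T}. (X \<omega> t - A' \<omega> - d (S \<omega>) t - h (Q \<omega>) t - w (S \<omega>) (Q \<omega>) t)\<^sup>2) \<partial>M)"
    using min[OF Am'] unfolding Z_def .
  also have "\<dots> = (\<integral>\<^sup>+\<omega>. ennreal (\<Sum>t\<in>{1..T}. (Z \<omega> t - \<epsilon> * B \<omega>)\<^sup>2) \<partial>M)"
    by (simp only: pw)
  finally show "(\<integral>\<^sup>+\<omega>. ennreal (\<Sum>t\<in>{1..T}. (Z \<omega> t)\<^sup>2) \<partial>M) \<le> (\<integral>\<^sup>+\<omega>. ennreal (\<Sum>t\<in>{1..T}. (Z \<omega> t - \<epsilon> * B \<omega>)\<^sup>2) \<partial>M)" .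
qed

lemma sumZ_AE: "AE \<omega> in M. (\<Sum>t\<in>{1..T}. Z \<omega> t) = 0"
proof -
  let ?s = "\<lambda>\<omega>. \<Sum>t\<in>{1..T}. Z \<omega> t"
  have sm: "?s \<in> borel_measurable M" using Zm by auto
  have si: "integrable M ?s" using Zi by auto
  have "(\<integral>\<omega>. (\<Sum>t\<in>{1..T}. Z \<omega> t * sgn (?s \<omega>)) \<partial>M) = 0"
    by (rule orth_A[where c=1]) (use sm in \<open>auto simp: abs_sgn_eq\<close>)
  moreover have "(\<Sum>t\<in>{1..T}. Z \<omega> t * sgn (?s \<omega>)) = \<bar>?s \<omega>\<bar>" for \<omega>
    by (simp add: sum_distrib_right[symmetric] abs_sgn)
  ultimately have "(\<integral>\<omega>. \<bar>?s \<omega>\<bar> \<partial>M) = 0" by simp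
  then have "AE \<omega> in M. \<bar>?s \<omega>\<bar> = 0"
    using integral_nonneg_eq_0_iff_AE[of M "\<lambda>\<omega>. \<bar>?s \<omega>\<bar>"] si by auto
  then show ?thesis by simp
qed


lemma cell_resid:
  assumes Xx: "\<And>\<omega> t. X \<omega> t = x (S \<omega>) (Q \<omega>) t"
  shows "AE \<omega> in M. \<forall>t\<in>{1..T}. Z \<omega> t = rhoF T (\<lambda>s q t. x s q t - d s t - h q t - w s q t) (S \<omega>) (Q \<omega>) t"
  using sumZ_AE
proof (rule AE_mp, intro AE_I2 impI ballI)
  fix \<omega> t assume s0: "(\<Sum>t\<in>{1..T}. Z \<omega> t) = 0" and t: "t \<in> {1..T}"
  let ?u = "\<lambda>t. x (S \<omega>) (Q \<omega>) t - d (S \<omega>) t - h (Q \<omega>) t - w (S \<omega>) (Q \<omega>) t"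
  have Zu: "Z \<omega> t = ?u t - A \<omega>" for t unfolding Z_def Xx by simp
  have T0: "T > 0" using t by auto
  have "(\<Sum>t\<in>{1..T}. ?u t) - real T * A \<omega> = 0" using s0 unfolding Zu by (simp add: sum_subtractf)
  then have "A \<omega> = (\<Sum>t\<in>{1..T}. ?u t) / real T" using T0 by (simp add: field_simps)
  then show "Z \<omega> t = rhoF T (\<lambda>s q t. x s q t - d s t - h q t - w s q t) (S \<omega>) (Q \<omega>) t"
    unfolding Zu rhoF_def by simp
qed



lemma P2_from:
  assumes rm: "\<And>t. (\<lambda>\<omega>. r (S \<omega>) (Q \<omega>) t) \<in> borel_measurable M"
    and rep: "AE \<omega> in M. \<forall>t\<in>{1..T}. Z \<omega> t = r (S \<omega>) (Q \<omega>) t"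
  shows "(\<Sum>s\<in>SS. \<Sum>q\<in>UNIV. p s q * (\<Sum>t\<in>{1..T}. \<delta> s t * r s q t)) = 0"
proof -
  have "0 = (\<integral>\<omega>. (\<Sum>t\<in>{1..T}. \<delta> (S \<omega>) t * Z \<omega> t) \<partial>M)" using orth_d by simp
  also have "\<dots> = (\<integral>\<omega>. (\<lambda>s q. \<Sum>t\<in>{1..T}. \<delta> s t * r s q t) (S \<omega>) (Q \<omega>) \<partial>M)"
  proof (rule integral_cong_AE)
    show "(\<lambda>\<omega>. \<Sum>t\<in>{1..T}. \<delta> (S \<omega>) t * Z \<omega> t) \<in> borel_measurable M"
      using Zm cellfun_meas[of "\<lambda>s q. \<delta> s t" for t] by (auto intro!: borel_measurable_sum borel_measurable_times)
    show "(\<lambda>\<omega>. (\<lambda>s q. \<Sum>t\<in>{1..T}. \<delta> s t * r s q t) (S \<omega>) (Q \<omega>)) \<in> borel_measurable M"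
      by (rule cellfun_meas)
    show "AE \<omega> in M. (\<Sum>t\<in>{1..T}. \<delta> (S \<omega>) t * Z \<omega> t) = (\<lambda>s q. \<Sum>t\<in>{1..T}. \<delta> s t * r s q t) (S \<omega>) (Q \<omega>)"
      using rep by eventually_elim simp
  qed
  also have "\<dots> = (\<Sum>s\<in>SS. \<Sum>q\<in>UNIV. (\<Sum>t\<in>{1..T}. \<delta> s t * r s q t) * p s q)"
    by (rule cellfun_integral1)
  finally show ?thesis by (simp add: mult.commute)
qed

lemma P3_from:
  assumes rm: "\<And>t. (\<lambda>\<omega>. r (S \<omega>) (Q \<omega>) t) \<in> borel_measurable M"
    and rep: "AE \<omega> in M. \<forall>t\<in>{1..T}. Z \<omega> t = r (S \<omega>) (Q \<omega>) t"
  shows "(\<Sum>s\<in>SS. \<Sum>q\<in>UNIV. p s q * (\<Sum>t\<in>{1..T}. \<eta> q t * r s q t)) = 0"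
proof -
  have "0 = (\<integral>\<omega>. (\<Sum>t\<in>{1..T}. \<eta> (Q \<omega>) t * Z \<omega> t) \<partial>M)" using orth_h by simp
  also have "\<dots> = (\<integral>\<omega>. (\<lambda>s q. \<Sum>t\<in>{1..T}. \<eta> q t * r s q t) (S \<omega>) (Q \<omega>) \<partial>M)"
  proof (rule integral_cong_AE)
    show "(\<lambda>\<omega>. \<Sum>t\<in>{1..T}. \<eta> (Q \<omega>) t * Z \<omega> t) \<in> borel_measurable M"
      using Zm cellfun_meas[of "\<lambda>s q. \<eta> q t" for t] by (auto intro!: borel_measurable_sum borel_measurable_times)
    show "(\<lambda>\<omega>. (\<lambda>s q. \<Sum>t\<in>{1..T}. \<eta> q t * r s q t) (S \<omega>) (Q \<omega>)) \<in> borel_measurable M"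
      by (rule cellfun_meas)
    show "AE \<omega> in M. (\<Sum>t\<in>{1..T}. \<eta> (Q \<omega>) t * Z \<omega> t) = (\<lambda>s q. \<Sum>t\<in>{1..T}. \<eta> q t * r s q t) (S \<omega>) (Q \<omega>)"
      using rep by eventually_elim simp
  qed
  also have "\<dots> = (\<Sum>s\<in>SS. \<Sum>q\<in>UNIV. (\<Sum>t\<in>{1..T}. \<eta> q t * r s q t) * p s q)"
    by (rule cellfun_integral1)
  finally show ?thesis by (simp add: mult.commute)
qed


end


lemma (in ddd) main_lemma:
  fixes X :: "'a \<Rightarrow> nat \<Rightarrow> real" and b :: "int \<Rightarrow> real" and E :: "int set"
    and r :: "enat \<Rightarrow> bool \<Rightarrow> nat \<Rightarrow> real"
  assumes finE: "finite E" and e0: "e0 \<in> E"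
    and pc: "pop_coef M T E S Q X b"
    and Xm: "\<And>t. t \<in> {1..T} \<Longrightarrow> (\<lambda>\<omega>. X \<omega> t) \<in> borel_measurable M"
    and X2: "\<And>t. t \<in> {1..T} \<Longrightarrow> integrable M (\<lambda>\<omega>. (X \<omega> t)\<^sup>2)"
    and rdef: "\<And>s q t. r s q t = revc e0 s q t - \<delta>0 s t - \<eta>0 q t - a0 s q"
    and R1: "\<And>s q. (\<Sum>t\<in>{1..T}. r s q t) = 0"
    and R2: "\<And>\<delta>. (\<Sum>s\<in>SS. \<Sum>q\<in>UNIV. p s q * (\<Sum>t\<in>{1..T}. \<delta> s t * r s q t)) = 0"
    and R3: "\<And>\<eta>. (\<Sum>s\<in>SS. \<Sum>q\<in>UNIV. p s q * (\<Sum>t\<in>{1..T}. \<eta> q t * r s q t)) = 0"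
  shows "(\<integral>\<omega>. (\<Sum>t\<in>{1..T}. r (S \<omega>) (Q \<omega>) t * X \<omega> t) \<partial>M)
       = (\<Sum>e\<in>E. b e * (\<Sum>s\<in>SS. \<Sum>q\<in>UNIV. p s q * (\<Sum>t\<in>{1..T}. r s q t * revc e s q t)))"
proof -
  obtain A d h where Am: "A \<in> borel_measurable M" and
    mn: "\<And>A' d' h' b'. A' \<in> borel_measurable M \<Longrightarrow>
           ssr_full M T E S Q X A d h b \<le> ssr_full M T E S Q X A' d' h' b'"
    using pc unfolding pop_coef_def by blast
  define w where "w s q t = (\<Sum>e\<in>E. b e * revc e s q t)" for s q t
  have ssr_eq: "ssr_full M T E S Q X A' d' h' b =
     (\<integral>\<^sup>+\<omega>. ennreal (\<Sum>t\<in>{1..T}. (X \<omega> t - A' \<omega> - d' (S \<omega>) t - h' (Q \<omega>) t - w (S \<omega>) (Q \<omega>) t)\<^sup>2) \<partial>M)"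
    for A' d' h'
    unfolding ssr_full_def w_def Rev_revc ..
  interpret F: ddd_fit M T SS S Q X A d h w
  proof unfold_locales
    show "\<And>t. t \<in> {1..T} \<Longrightarrow> (\<lambda>\<omega>. X \<omega> t) \<in> borel_measurable M" using Xm .
    show "\<And>t. t \<in> {1..T} \<Longrightarrow> integrable M (\<lambda>\<omega>. (X \<omega> t)\<^sup>2)" using X2 .
    show "A \<in> borel_measurable M" using Am .
    fix A' :: "'a \<Rightarrow> real" and d' :: "enat \<Rightarrow> nat \<Rightarrow> real" and h' :: "bool \<Rightarrow> nat \<Rightarrow> real"
    assume "A' \<in> borel_measurable M"
    from mn[OF this, of d' h' b] show "(\<integral>\<^sup>+\<omega>. ennreal (\<Sum>t\<in>{1..T}. (X \<omega> t - A \<omega> - d (S \<omega>) t - h (Q \<omega>) t - w (S \<omega>) (Q \<omega>) t)\<^sup>2) \<partial>M)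
      \<le> (\<integral>\<^sup>+\<omega>. ennreal (\<Sum>t\<in>{1..T}. (X \<omega> t - A' \<omega> - d' (S \<omega>) t - h' (Q \<omega>) t - w (S \<omega>) (Q \<omega>) t)\<^sup>2) \<partial>M)"
      unfolding ssr_eq .
  qed
  have orth_b: "(\<integral>\<omega>. (\<Sum>t\<in>{1..T}. F.Z \<omega> t * revc e0 (S \<omega>) (Q \<omega>) t) \<partial>M) = 0"
  proof (rule VL[where v="\<lambda>\<omega> t. revc e0 (S \<omega>) (Q \<omega>) t"])
    show "finite {1..T}" by simp
    show "\<And>t. t \<in> {1..T} \<Longrightarrow> (\<lambda>\<omega>. F.Z \<omega> t) \<in> borel_measurable M" using F.Zm .
    show "\<And>t. t \<in> {1..T} \<Longrightarrow> integrable M (\<lambda>\<omega>. (F.Z \<omega> t)\<^sup>2)" using F.Z2 .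
    show "\<And>t. t \<in> {1..T} \<Longrightarrow> (\<lambda>\<omega>. revc e0 (S \<omega>) (Q \<omega>) t) \<in> borel_measurable M"
      using cellfun_meas[of "\<lambda>s q. revc e0 s q t" for t] by simp
    show "\<And>t. t \<in> {1..T} \<Longrightarrow> \<exists>B. \<forall>\<omega>\<in>space M. \<bar>revc e0 (S \<omega>) (Q \<omega>) t\<bar> \<le> B"
      using cellfun_bdd_ex[of "\<lambda>s q. revc e0 s q t" for t] by simp
    fix \<epsilon> :: real
    define b' where "b' e = b e + (if e = e0 then \<epsilon> else 0)" for e
    have sb: "(\<Sum>e\<in>E. b' e * Rev S Q e \<omega> t) = w (S \<omega>) (Q \<omega>) t + \<epsilon> * revc e0 (S \<omega>) (Q \<omega>) t" for \<omega> t
    proof -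
      have "(\<Sum>e\<in>E. b' e * Rev S Q e \<omega> t) = (\<Sum>e\<in>E. b e * revc e (S \<omega>) (Q \<omega>) t + (if e = e0 then \<epsilon> * revc e0 (S \<omega>) (Q \<omega>) t else 0))"
        unfolding b'_def Rev_revc by (intro sum.cong) (auto simp: algebra_simps)
      also have "\<dots> = w (S \<omega>) (Q \<omega>) t + \<epsilon> * revc e0 (S \<omega>) (Q \<omega>) t"
        unfolding w_def sum.distrib using finE e0 by (simp add: sum.delta)
      finally show ?thesis .
    qed
    have pw: "X \<omega> t - A \<omega> - d (S \<omega>) t - h (Q \<omega>) t - (\<Sum>e\<in>E. b' e * Rev S Q e \<omega> t) = F.Z \<omega> t - \<epsilon> * revc e0 (S \<omega>) (Q \<omega>) t" for \<omega> t
      unfolding sb F.Z_def by simp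
    have "(\<integral>\<^sup>+\<omega>. ennreal (\<Sum>t\<in>{1..T}. (F.Z \<omega> t)\<^sup>2) \<partial>M) = ssr_full M T E S Q X A d h b"
      unfolding ssr_eq F.Z_def ..
    also have "\<dots> \<le> ssr_full M T E S Q X A d h b'" by (rule mn[OF Am])
    also have "\<dots> = (\<integral>\<^sup>+\<omega>. ennreal (\<Sum>t\<in>{1..T}. (F.Z \<omega> t - \<epsilon> * revc e0 (S \<omega>) (Q \<omega>) t)\<^sup>2) \<partial>M)"
      unfolding ssr_full_def by (simp only: pw)
    finally show "(\<integral>\<^sup>+\<omega>. ennreal (\<Sum>t\<in>{1..T}. (F.Z \<omega> t)\<^sup>2) \<partial>M) \<le> (\<integral>\<^sup>+\<omega>. ennreal (\<Sum>t\<in>{1..T}. (F.Z \<omega> t - \<epsilon> * revc e0 (S \<omega>) (Q \<omega>) t)\<^sup>2) \<partial>M)" .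
  qed
  have Xi: "integrable M (\<lambda>\<omega>. X \<omega> t)" if "t \<in> {1..T}" for t
    using square_integrable_imp_integrable[OF Xm[OF that] X2[OF that]] .
  define D where "D s q t = d s t + h q t + w s q t" for s q t
  have pt: "(\<Sum>t\<in>{1..T}. r (S \<omega>) (Q \<omega>) t * X \<omega> t) =
      (\<Sum>t\<in>{1..T}. r (S \<omega>) (Q \<omega>) t * F.Z \<omega> t) + (\<Sum>t\<in>{1..T}. r (S \<omega>) (Q \<omega>) t * D (S \<omega>) (Q \<omega>) t)" for \<omega>
  proof -
    have "(\<Sum>t\<in>{1..T}. r (S \<omega>) (Q \<omega>) t * X \<omega> t) =
       (\<Sum>t\<in>{1..T}. r (S \<omega>) (Q \<omega>) t * F.Z \<omega> t + A \<omega> * r (S \<omega>) (Q \<omega>) t + r (S \<omega>) (Q \<omega>) t * D (S \<omega>) (Q \<omega>) t)"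
      by (intro sum.cong refl) (simp add: F.Z_def D_def algebra_simps)
    also have "\<dots> = (\<Sum>t\<in>{1..T}. r (S \<omega>) (Q \<omega>) t * F.Z \<omega> t) + A \<omega> * (\<Sum>t\<in>{1..T}. r (S \<omega>) (Q \<omega>) t)
        + (\<Sum>t\<in>{1..T}. r (S \<omega>) (Q \<omega>) t * D (S \<omega>) (Q \<omega>) t)"
      by (simp add: sum.distrib sum_distrib_left)
    finally show ?thesis using R1 by simp
  qed
  have iZ: "integrable M (\<lambda>\<omega>. f (S \<omega>) (Q \<omega>) * F.Z \<omega> t)" if "t \<in> {1..T}" for f t
    using cellfun_integrable[OF F.Zi[OF that], of f] .
  have i1: "integrable M (\<lambda>\<omega>. \<Sum>t\<in>{1..T}. r (S \<omega>) (Q \<omega>) t * F.Z \<omega> t)"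
    using iZ[of _ "\<lambda>s q. r s q t" for t] by auto
  have i2: "integrable M (\<lambda>\<omega>. \<Sum>t\<in>{1..T}. r (S \<omega>) (Q \<omega>) t * D (S \<omega>) (Q \<omega>) t)"
    using cellfun_integrable[of "\<lambda>_. 1" "\<lambda>s q. r s q t * D s q t" for t] by auto
  have I1: "(\<integral>\<omega>. (\<Sum>t\<in>{1..T}. r (S \<omega>) (Q \<omega>) t * F.Z \<omega> t) \<partial>M) = 0"
  proof -
    have ptw: "(\<Sum>t\<in>{1..T}. r (S \<omega>) (Q \<omega>) t * F.Z \<omega> t) =
      (\<Sum>t\<in>{1..T}. F.Z \<omega> t * revc e0 (S \<omega>) (Q \<omega>) t) - (\<Sum>t\<in>{1..T}. \<delta>0 (S \<omega>) t * F.Z \<omega> t)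
      - (\<Sum>t\<in>{1..T}. \<eta>0 (Q \<omega>) t * F.Z \<omega> t) - (\<Sum>t\<in>{1..T}. F.Z \<omega> t * a0 (S \<omega>) (Q \<omega>))" for \<omega>
      unfolding rdef by (simp add: sum_subtractf[symmetric] algebra_simps)
    have ja: "integrable M (\<lambda>\<omega>. \<Sum>t\<in>{1..T}. F.Z \<omega> t * revc e0 (S \<omega>) (Q \<omega>) t)"
      using iZ[of _ "\<lambda>s q. revc e0 s q t" for t] by (auto simp: mult.commute)
    have jb: "integrable M (\<lambda>\<omega>. \<Sum>t\<in>{1..T}. \<delta>0 (S \<omega>) t * F.Z \<omega> t)"
      using iZ[of _ "\<lambda>s q. \<delta>0 s t" for t] by auto
    have jc: "integrable M (\<lambda>\<omega>. \<Sum>t\<in>{1..T}. \<eta>0 (Q \<omega>) t * F.Z \<omega> t)"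
      using iZ[of _ "\<lambda>s q. \<eta>0 q t" for t] by auto
    have jd: "integrable M (\<lambda>\<omega>. \<Sum>t\<in>{1..T}. F.Z \<omega> t * a0 (S \<omega>) (Q \<omega>))"
      using iZ[of _ "\<lambda>s q. a0 s q"] by (auto simp: mult.commute)
    have za: "(\<integral>\<omega>. (\<Sum>t\<in>{1..T}. F.Z \<omega> t * a0 (S \<omega>) (Q \<omega>)) \<partial>M) = 0"
      using F.orth_A[OF cellfun_meas cellfun_bdd] .
    show ?thesis unfolding ptw using ja jb jc jd orth_b F.orth_d F.orth_h za
      by (simp add: integral_diff)
  qed
  have I2: "(\<integral>\<omega>. (\<Sum>t\<in>{1..T}. r (S \<omega>) (Q \<omega>) t * D (S \<omega>) (Q \<omega>) t) \<partial>M)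
      = (\<Sum>s\<in>SS. \<Sum>q\<in>UNIV. (\<Sum>t\<in>{1..T}. r s q t * D s q t) * p s q)"
    using cellfun_integral1[of "\<lambda>s q. \<Sum>t\<in>{1..T}. r s q t * D s q t"] by simp
  have alg: "(\<Sum>s\<in>SS. \<Sum>q\<in>UNIV. (\<Sum>t\<in>{1..T}. r s q t * D s q t) * p s q)
      = (\<Sum>e\<in>E. b e * (\<Sum>s\<in>SS. \<Sum>q\<in>UNIV. p s q * (\<Sum>t\<in>{1..T}. r s q t * revc e s q t)))"
  proof -
    have "(\<Sum>s\<in>SS. \<Sum>q\<in>UNIV. (\<Sum>t\<in>{1..T}. r s q t * D s q t) * p s q)
      = (\<Sum>s\<in>SS. \<Sum>q\<in>UNIV. p s q * (\<Sum>t\<in>{1..T}. d s t * r s q t))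
       + (\<Sum>s\<in>SS. \<Sum>q\<in>UNIV. p s q * (\<Sum>t\<in>{1..T}. h q t * r s q t))
       + (\<Sum>s\<in>SS. \<Sum>q\<in>UNIV. p s q * (\<Sum>t\<in>{1..T}. r s q t * w s q t))"
      unfolding D_def by (simp add: sum.distrib[symmetric] sum_distrib_left algebra_simps)
    also have "\<dots> = (\<Sum>s\<in>SS. \<Sum>q\<in>UNIV. p s q * (\<Sum>t\<in>{1..T}. r s q t * w s q t))"
      using R2[of d] R3[of h] by simp
    also have "\<dots> = (\<Sum>e\<in>E. b e * (\<Sum>s\<in>SS. \<Sum>q\<in>UNIV. p s q * (\<Sum>t\<in>{1..T}. r s q t * revc e s q t)))"
      unfolding w_def by (simp add: sum_distrib_left sum_distrib_right sum.swap[of _ E] algebra_simps)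
    finally show ?thesis .
  qed
  have "(\<integral>\<omega>. (\<Sum>t\<in>{1..T}. r (S \<omega>) (Q \<omega>) t * X \<omega> t) \<partial>M)
     = (\<integral>\<omega>. (\<Sum>t\<in>{1..T}. r (S \<omega>) (Q \<omega>) t * F.Z \<omega> t) + (\<Sum>t\<in>{1..T}. r (S \<omega>) (Q \<omega>) t * D (S \<omega>) (Q \<omega>) t) \<partial>M)"
    by (simp only: pt)
  also have "\<dots> = (\<integral>\<omega>. (\<Sum>t\<in>{1..T}. r (S \<omega>) (Q \<omega>) t * F.Z \<omega> t) \<partial>M) + (\<integral>\<omega>. (\<Sum>t\<in>{1..T}. r (S \<omega>) (Q \<omega>) t * D (S \<omega>) (Q \<omega>) t) \<partial>M)"
    using i1 i2 by (rule Bochner_Integration.integral_add)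
  finally show ?thesis using I1 I2 alg by simp
qed


lemma swap4: "(\<Sum>x\<in>A. \<Sum>y\<in>B. \<Sum>z\<in>C. \<Sum>w\<in>D. f x y z w) = (\<Sum>y\<in>B. \<Sum>z\<in>C. \<Sum>w\<in>D. \<Sum>x\<in>A. f x y z w)"
proof -
  have "(\<Sum>x\<in>A. \<Sum>y\<in>B. \<Sum>z\<in>C. \<Sum>w\<in>D. f x y z w) = (\<Sum>y\<in>B. \<Sum>x\<in>A. \<Sum>z\<in>C. \<Sum>w\<in>D. f x y z w)"
    by (rule sum.swap)
  also have "\<dots> = (\<Sum>y\<in>B. \<Sum>z\<in>C. \<Sum>x\<in>A. \<Sum>w\<in>D. f x y z w)"
    by (rule sum.cong[OF refl], rule sum.swap)
  also have "\<dots> = (\<Sum>y\<in>B. \<Sum>z\<in>C. \<Sum>w\<in>D. \<Sum>x\<in>A. f x y z w)"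
    by (rule sum.cong[OF refl], rule sum.cong[OF refl], rule sum.swap)
  finally show ?thesis .
qed

definition (in ddd) goodr :: "int \<Rightarrow> ('a \<Rightarrow> nat \<Rightarrow> real) \<Rightarrow> (enat \<Rightarrow> bool \<Rightarrow> nat \<Rightarrow> real) \<Rightarrow> bool" where
  "goodr e G r \<longleftrightarrow>
     (\<exists>\<delta> \<eta> a. \<forall>s q t. r s q t = revc e s q t - \<delta> s t - \<eta> q t - a s q) \<and>
     (\<forall>s q. (\<Sum>t\<in>{1..T}. r s q t) = 0) \<and>
     (\<forall>\<delta>. (\<Sum>s\<in>SS. \<Sum>q\<in>UNIV. p s q * (\<Sum>t\<in>{1..T}. \<delta> s t * r s q t)) = 0) \<and>
     (\<forall>\<eta>. (\<Sum>s\<in>SS. \<Sum>q\<in>UNIV. p s q * (\<Sum>t\<in>{1..T}. \<eta> q t * r s q t)) = 0) \<and>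
     (AE \<omega> in M. \<forall>t\<in>{1..T}. Rev S Q e \<omega> t - G \<omega> t = r (S \<omega>) (Q \<omega>) t) \<and>
     (\<forall>t\<in>{1..T}. (\<lambda>\<omega>. Rev S Q e \<omega> t - G \<omega> t) \<in> borel_measurable M)"

lemma (in ddd) fe_cell:
  assumes ff: "fe_fit M T S Q (Rev S Q e) G"
  shows "\<exists>r. goodr e G r"
proof -
  obtain A d h where Am: "A \<in> borel_measurable M" and Gd: "\<forall>\<omega> t. G \<omega> t = A \<omega> + d (S \<omega>) t + h (Q \<omega>) t"
    and mn: "\<forall>A' d' h'. A' \<in> borel_measurable M \<longrightarrow>
           (\<integral>\<^sup>+ \<omega>. ennreal (\<Sum>t\<in>{1..T}. (Rev S Q e \<omega> t - G \<omega> t)\<^sup>2) \<partial>M)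
           \<le> (\<integral>\<^sup>+ \<omega>. ennreal (\<Sum>t\<in>{1..T}. (Rev S Q e \<omega> t - A' \<omega> - d' (S \<omega>) t - h' (Q \<omega>) t)\<^sup>2) \<partial>M)"
    using ff unfolding fe_fit_def by blast
  interpret F: ddd_fit M T SS S Q "Rev S Q e" A d h "\<lambda>_ _ _. 0"
  proof unfold_locales
    show "\<And>t. t \<in> {1..T} \<Longrightarrow> (\<lambda>\<omega>. Rev S Q e \<omega> t) \<in> borel_measurable M"
      unfolding Rev_revc using cellfun_meas[of "\<lambda>s q. revc e s q t" for t] by simp
    show "\<And>t. t \<in> {1..T} \<Longrightarrow> integrable M (\<lambda>\<omega>. (Rev S Q e \<omega> t)\<^sup>2)"
      unfolding Rev_revc using cellfun_integrable[of "\<lambda>_. 1" "\<lambda>s q. (revc e s q t)\<^sup>2" for t] by simp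
    show "A \<in> borel_measurable M" using Am .
    fix A' :: "'a \<Rightarrow> real" and d' :: "enat \<Rightarrow> nat \<Rightarrow> real" and h' :: "bool \<Rightarrow> nat \<Rightarrow> real"
    assume "A' \<in> borel_measurable M"
    with mn Gd show "(\<integral>\<^sup>+\<omega>. ennreal (\<Sum>t\<in>{1..T}. (Rev S Q e \<omega> t - A \<omega> - d (S \<omega>) t - h (Q \<omega>) t - 0)\<^sup>2) \<partial>M)
      \<le> (\<integral>\<^sup>+\<omega>. ennreal (\<Sum>t\<in>{1..T}. (Rev S Q e \<omega> t - A' \<omega> - d' (S \<omega>) t - h' (Q \<omega>) t - 0)\<^sup>2) \<partial>M)"
      by (simp add: diff_diff_eq)
  qed
  have ZG: "F.Z \<omega> t = Rev S Q e \<omega> t - G \<omega> t" for \<omega> t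
    unfolding F.Z_def using Gd by simp
  define r where "r = rhoF T (\<lambda>s q t. revc e s q t - d s t - h q t - 0)"
  have rep: "AE \<omega> in M. \<forall>t\<in>{1..T}. F.Z \<omega> t = r (S \<omega>) (Q \<omega>) t"
    unfolding r_def by (rule F.cell_resid) (rule Rev_revc)
  have rm: "(\<lambda>\<omega>. r (S \<omega>) (Q \<omega>) t) \<in> borel_measurable M" for t
    using cellfun_meas[of "\<lambda>s q. r s q t"] by simp
  have "goodr e G r"
    unfolding goodr_def
  proof (intro conjI allI ballI)
    show "\<exists>\<delta> \<eta> a. \<forall>s q t. r s q t = revc e s q t - \<delta> s t - \<eta> q t - a s q"
      by (rule exI[of _ d], rule exI[of _ h], rule exI[of _ "\<lambda>s q. (\<Sum>t'\<in>{1..T}. revc e s q t' - d s t' - h q t' - 0) / real T"])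
         (simp add: r_def rhoF_def)
    show "(\<Sum>t\<in>{1..T}. r s q t) = 0" for s q unfolding r_def by (rule rhoF_sum)
    show "(\<Sum>s\<in>SS. \<Sum>q\<in>UNIV. p s q * (\<Sum>t\<in>{1..T}. \<delta> s t * r s q t)) = 0" for \<delta>
      by (rule F.P2_from[OF rm rep])
    show "(\<Sum>s\<in>SS. \<Sum>q\<in>UNIV. p s q * (\<Sum>t\<in>{1..T}. \<eta> q t * r s q t)) = 0" for \<eta>
      by (rule F.P3_from[OF rm rep])
    show "AE \<omega> in M. \<forall>t\<in>{1..T}. Rev S Q e \<omega> t - G \<omega> t = r (S \<omega>) (Q \<omega>) t"
      using rep by (simp add: ZG)
    show "(\<lambda>\<omega>. Rev S Q e \<omega> t - G \<omega> t) \<in> borel_measurable M" if "t \<in> {1..T}" for t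
      using F.Zm[OF that] by (simp add: ZG)
  qed
  then show ?thesis by blast
qed

lemma (in ddd) gram_eq:
  assumes g1: "goodr e G r" and g2: "goodr e' G' r'"
  shows "(\<integral>\<omega>. (\<Sum>t\<in>{1..T}. (Rev S Q e \<omega> t - G \<omega> t) * (Rev S Q e' \<omega> t - G' \<omega> t)) \<partial>M)
     = (\<Sum>s\<in>SS. \<Sum>q\<in>UNIV. p s q * (\<Sum>t\<in>{1..T}. r s q t * revc e' s q t))"
proof -
  obtain \<delta> \<eta> a where r'd: "\<And>s q t. r' s q t = revc e' s q t - \<delta> s t - \<eta> q t - a s q"
    using g2 unfolding goodr_def by blast
  have R1: "\<And>s q. (\<Sum>t\<in>{1..T}. r s q t) = 0"
   and R2: "\<And>\<delta>. (\<Sum>s\<in>SS. \<Sum>q\<in>UNIV. p s q * (\<Sum>t\<in>{1..T}. \<delta> s t * r s q t)) = 0"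
   and R3: "\<And>\<eta>. (\<Sum>s\<in>SS. \<Sum>q\<in>UNIV. p s q * (\<Sum>t\<in>{1..T}. \<eta> q t * r s q t)) = 0"
   and A1: "AE \<omega> in M. \<forall>t\<in>{1..T}. Rev S Q e \<omega> t - G \<omega> t = r (S \<omega>) (Q \<omega>) t"
   and M1: "\<forall>t\<in>{1..T}. (\<lambda>\<omega>. Rev S Q e \<omega> t - G \<omega> t) \<in> borel_measurable M"
    using g1 unfolding goodr_def by blast+
  have A2: "AE \<omega> in M. \<forall>t\<in>{1..T}. Rev S Q e' \<omega> t - G' \<omega> t = r' (S \<omega>) (Q \<omega>) t"
   and M2: "\<forall>t\<in>{1..T}. (\<lambda>\<omega>. Rev S Q e' \<omega> t - G' \<omega> t) \<in> borel_measurable M"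
    using g2 unfolding goodr_def by blast+
  have "(\<integral>\<omega>. (\<Sum>t\<in>{1..T}. (Rev S Q e \<omega> t - G \<omega> t) * (Rev S Q e' \<omega> t - G' \<omega> t)) \<partial>M)
     = (\<integral>\<omega>. (\<lambda>s q. \<Sum>t\<in>{1..T}. r s q t * r' s q t) (S \<omega>) (Q \<omega>) \<partial>M)"
  proof (rule integral_cong_AE)
    show "(\<lambda>\<omega>. \<Sum>t\<in>{1..T}. (Rev S Q e \<omega> t - G \<omega> t) * (Rev S Q e' \<omega> t - G' \<omega> t)) \<in> borel_measurable M"
      using M1 M2 by (auto intro!: borel_measurable_sum borel_measurable_times)
    show "(\<lambda>\<omega>. (\<lambda>s q. \<Sum>t\<in>{1..T}. r s q t * r' s q t) (S \<omega>) (Q \<omega>)) \<in> borel_measurable M"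
      by (rule cellfun_meas)
    show "AE \<omega> in M. (\<Sum>t\<in>{1..T}. (Rev S Q e \<omega> t - G \<omega> t) * (Rev S Q e' \<omega> t - G' \<omega> t)) = (\<lambda>s q. \<Sum>t\<in>{1..T}. r s q t * r' s q t) (S \<omega>) (Q \<omega>)"
      using A1 A2 by eventually_elim simp
  qed
  also have "\<dots> = (\<Sum>s\<in>SS. \<Sum>q\<in>UNIV. (\<Sum>t\<in>{1..T}. r s q t * r' s q t) * p s q)"
    by (rule cellfun_integral1)
  also have "\<dots> = (\<Sum>s\<in>SS. \<Sum>q\<in>UNIV. p s q * (\<Sum>t\<in>{1..T}. r s q t * revc e' s q t))
      - (\<Sum>s\<in>SS. \<Sum>q\<in>UNIV. p s q * (\<Sum>t\<in>{1..T}. \<delta> s t * r s q t))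
      - (\<Sum>s\<in>SS. \<Sum>q\<in>UNIV. p s q * (\<Sum>t\<in>{1..T}. \<eta> q t * r s q t))
      - (\<Sum>s\<in>SS. \<Sum>q\<in>UNIV. p s q * a s q * (\<Sum>t\<in>{1..T}. r s q t))"
    unfolding r'd by (simp add: sum_subtractf[symmetric] sum_distrib_left algebra_simps)
  also have "\<dots> = (\<Sum>s\<in>SS. \<Sum>q\<in>UNIV. p s q * (\<Sum>t\<in>{1..T}. r s q t * revc e' s q t))"
    using R1 R2[of \<delta>] R3[of \<eta>] by simp
  finally show ?thesis .
qed

theorem mainTheorem2:
  fixes M :: "'a measure" and T L K :: nat and SS :: "enat set"
    and S :: "'a \<Rightarrow> enat" and Q :: "'a \<Rightarrow> bool"
    and Yinf :: "'a \<Rightarrow> nat \<Rightarrow> real" and Yg :: "nat \<Rightarrow> 'a \<Rightarrow> nat \<Rightarrow> real"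
  assumes ps: "prob_space M"
    and SS_sub: "SS \<subseteq> enat ` {2..T} \<union> {\<infinity>}"
    and S_meas: "S \<in> measurable M (count_space UNIV)"
    and Q_meas: "Q \<in> measurable M (count_space UNIV)"
    and S_range: "\<forall>\<omega>\<in>space M. S \<omega> \<in> SS"
    and Yinf_meas: "\<forall>t. (\<lambda>\<omega>. Yinf \<omega> t) \<in> borel_measurable M"
    and Yg_meas: "\<forall>g\<in>trg_groups SS. \<forall>t. (\<lambda>\<omega>. Yg g \<omega> t) \<in> borel_measurable M"
    and Yinf_L2: "\<forall>t\<in>{1..T}. integrable M (\<lambda>\<omega>. (Yinf \<omega> t)\<^sup>2)"
    and Yg_L2: "\<forall>g\<in>trg_groups SS. \<forall>t\<in>{1..T}. integrable M (\<lambda>\<omega>. (Yg g \<omega> t)\<^sup>2)"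
    and no_anticip: "\<forall>g\<in>trg_groups SS. \<forall>\<omega>\<in>space M. \<forall>t. 1 \<le> t \<and> t < g \<longrightarrow> Yg g \<omega> t = Yinf \<omega> t"
    and cells_pos: "\<forall>s\<in>SS. \<forall>q. measure M {\<omega>\<in>space M. S \<omega> = s \<and> Q \<omega> = q} > 0"
    and window: "\<forall>g\<in>trg_groups SS. \<forall>t\<in>{1..T}.
                   - int L \<le> int t - int g \<and> int t - int g \<le> int K"
    and gram: "\<exists>F. (\<forall>e\<in>ev_set L K. fe_fit M T S Q (Rev S Q e) (F e)) \<and>
                 nonsingular_on (ev_set L K)
                   (\<lambda>e e'. \<integral>\<omega>. (\<Sum>t\<in>{1..T}. (Rev S Q e \<omega> t - F e \<omega> t)
                                          * (Rev S Q e' \<omega> t - F e' \<omega> t)) \<partial>M)"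
    and ddd_pct: "\<forall>g\<in>trg_groups SS. \<forall>gc\<in>SS. \<forall>t\<in>{2..T}. enat g < gc \<and> enat t \<le> gc \<longrightarrow>
                   Dtrend M S Q Yinf t (enat g) True - Dtrend M S Q Yinf t (enat g) False
                   = Dtrend M S Q Yinf t gc True - Dtrend M S Q Yinf t gc False"
    and alpha: "pop_coef M T (ev_set L K) S Q (Yobs SS S Q Yinf Yg) \<alpha>"
    and omega: "\<forall>g\<in>trg_groups SS. \<forall>l\<in>ev_set L K.
                   pop_coef M T (ev_set L K) S Q (Rgl S Q g l) (\<omega> g l)"
    and j: "j \<in> ev_set L K"
  shows "\<alpha> j = (\<Sum>g\<in>trg_groups SS. \<Sum>l\<in>ev_set L K. \<omega> g l j * CATT M S Q Yinf Yg g l)"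
  proof -
  have finSS: "finite SS"
    by (rule finite_subset[OF SS_sub]) simp
  interpret ddd M T SS S Q
    by (intro ddd.intro ddd_axioms.intro ps finSS S_meas Q_meas S_range)
  define E where "E = ev_set L K"
  have finE: "finite E" unfolding E_def ev_set_def by simp
  have E0: "0 \<in> E" unfolding E_def ev_set_def by simp
  have jE: "j \<in> E" using j unfolding E_def .
  define trg where "trg = trg_groups SS"
  have trg_fin: "finite trg"
    unfolding trg_def trg_groups_def using finite_vimageI[OF finSS, of enat] by (simp add: vimage_def inj_on_def)
  obtain F where ffit: "\<forall>e\<in>E. fe_fit M T S Q (Rev S Q e) (F e)"
    and ns: "nonsingular_on E (\<lambda>e e'. \<integral>\<omega>. (\<Sum>t\<in>{1..T}. (Rev S Q e \<omega> t - F e \<omega> t) * (Rev S Q e' \<omega> t - F e' \<omega> t)) \<partial>M)"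
    using gram unfolding E_def by blast
  have "\<forall>e\<in>E. \<exists>r. goodr e (F e) r" using ffit fe_cell by blast
  then obtain rr where rr: "\<forall>e\<in>E. goodr e (F e) (rr e)" by metis
  define KK where "KK e e' = (\<Sum>s\<in>SS. \<Sum>q\<in>UNIV. p s q * (\<Sum>t\<in>{1..T}. rr e s q t * revc e' s q t))" for e e'
  have ns': "nonsingular_on E KK"
    unfolding nonsingular_on_def
  proof (intro allI impI)
    fix c assume h: "\<forall>i\<in>E. (\<Sum>j\<in>E. KK i j * c j) = 0"
    have "\<forall>i\<in>E. (\<Sum>j\<in>E. (\<integral>\<omega>. (\<Sum>t\<in>{1..T}. (Rev S Q i \<omega> t - F i \<omega> t) * (Rev S Q j \<omega> t - F j \<omega> t)) \<partial>M) * c j) = 0"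
    proof
      fix i assume i: "i \<in> E"
      have "(\<Sum>j\<in>E. (\<integral>\<omega>. (\<Sum>t\<in>{1..T}. (Rev S Q i \<omega> t - F i \<omega> t) * (Rev S Q j \<omega> t - F j \<omega> t)) \<partial>M) * c j)
         = (\<Sum>j\<in>E. KK i j * c j)"
      proof (rule sum.cong[OF refl])
        fix j assume j: "j \<in> E"
        show "(\<integral>\<omega>. (\<Sum>t\<in>{1..T}. (Rev S Q i \<omega> t - F i \<omega> t) * (Rev S Q j \<omega> t - F j \<omega> t)) \<partial>M) * c j = KK i j * c j"
          using gram_eq[OF rr[rule_format, OF i] rr[rule_format, OF j]] unfolding KK_def by simp
      qed
      then show "(\<Sum>j\<in>E. (\<integral>\<omega>. (\<Sum>t\<in>{1..T}. (Rev S Q i \<omega> t - F i \<omega> t) * (Rev S Q j \<omega> t - F j \<omega> t)) \<partial>M) * c j) = 0"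
        using h i by simp
    qed
    then show "\<forall>i\<in>E. c i = 0" using ns unfolding nonsingular_on_def by blast
  qed
  have R1: "\<And>s q. (\<Sum>t\<in>{1..T}. rr e s q t) = 0"
   and R2: "\<And>\<delta>. (\<Sum>s\<in>SS. \<Sum>q\<in>UNIV. p s q * (\<Sum>t\<in>{1..T}. \<delta> s t * rr e s q t)) = 0"
   and R3: "\<And>\<eta>. (\<Sum>s\<in>SS. \<Sum>q\<in>UNIV. p s q * (\<Sum>t\<in>{1..T}. \<eta> q t * rr e s q t)) = 0"
   and Rd: "\<exists>\<delta> \<eta> a. \<forall>s q t. rr e s q t = revc e s q t - \<delta> s t - \<eta> q t - a s q"
   if "e \<in> E" for e
    using rr that unfolding goodr_def by blast+
  have KKc: "(\<Sum>e'\<in>E. KK e e' * cc e') = (\<Sum>s\<in>SS. \<Sum>q\<in>UNIV. p s q * (\<Sum>t\<in>{1..T}. rr e s q t * (\<Sum>e'\<in>E. cc e' * revc e' s q t)))" for e cc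
  proof -
    have "(\<Sum>e'\<in>E. KK e e' * cc e') = (\<Sum>e'\<in>E. \<Sum>s\<in>SS. \<Sum>q\<in>UNIV. \<Sum>t\<in>{1..T}. p s q * rr e s q t * revc e' s q t * cc e')"
      unfolding KK_def by (simp add: sum_distrib_left sum_distrib_right mult_ac)
    also have "\<dots> = (\<Sum>s\<in>SS. \<Sum>q\<in>UNIV. \<Sum>t\<in>{1..T}. \<Sum>e'\<in>E. p s q * rr e s q t * revc e' s q t * cc e')"
      by (rule swap4)
    also have "\<dots> = (\<Sum>s\<in>SS. \<Sum>q\<in>UNIV. p s q * (\<Sum>t\<in>{1..T}. rr e s q t * (\<Sum>e'\<in>E. cc e' * revc e' s q t)))"
      by (simp add: sum_distrib_left mult_ac)
    finally show ?thesis .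
  qed
  have inf_in: "\<infinity> \<in> SS"
  proof (rule ccontr)
    assume ni: "\<infinity> \<notin> SS"
    define cc where "cc e' = real_of_int e' + 1" for e'
    have val: "(\<Sum>e'\<in>E. cc e' * revc e' s q t) = (if q then 1 - real (the_enat s) else 0) + (if q then real t else 0)"
      if s: "s \<in> SS" and t: "t \<in> {1..T}" for s q t
    proof -
      obtain g where sg: "s = enat g" using s ni by (cases s) auto
      have g: "g \<in> trg_groups SS" using s sg by (simp add: trg_groups_def)
      have win: "- int L \<le> int t - int g \<and> int t - int g \<le> int K" using window g t by blast
      have rv: "revc e' s q t = (if e' = int t - int g \<and> q then 1 else 0)" for e' unfolding revc_def sg by auto
      show ?thesis
      proof (cases q)
        case False then show ?thesis by (simp add: revc_def)
      next
        case True
        have "(\<Sum>e'\<in>E. cc e' * revc e' s q t) = (\<Sum>e'\<in>E. if e' = int t - int g then cc e' else 0)"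
          using True by (intro sum.cong refl) (simp add: revc_def sg)
        also have "\<dots> = (if int t - int g \<in> E then cc (int t - int g) else 0)"
          using finE by (simp add: sum.delta)
        also have "\<dots> = real t - real g + 1"
        proof (cases "int t - int g \<in> E")
          case True then show ?thesis by (simp add: cc_def)
        next
          case False
          then have "int t - int g = -1" using win unfolding E_def ev_set_def by auto
          then have "real t - real g + 1 = 0" by linarith
          then show ?thesis using False by simp
        qed
        finally show ?thesis using True sg by simp
      qed
    qed
    have "\<forall>e\<in>E. (\<Sum>e'\<in>E. KK e e' * cc e') = 0"
    proof
      fix e assume e: "e \<in> E"
      have "(\<Sum>e'\<in>E. KK e e' * cc e') = (\<Sum>s\<in>SS. \<Sum>q\<in>UNIV. p s q * (\<Sum>t\<in>{1..T}. rr e s q t *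
           ((if q then 1 - real (the_enat s) else 0) + (if q then real t else 0))))"
        unfolding KKc by (intro sum.cong refl) (simp add: val)
      also have "\<dots> = (\<Sum>s\<in>SS. \<Sum>q\<in>UNIV. p s q * (if q then 1 - real (the_enat s) else 0) * (\<Sum>t\<in>{1..T}. rr e s q t))
          + (\<Sum>s\<in>SS. \<Sum>q\<in>UNIV. p s q * (\<Sum>t\<in>{1..T}. (if q then real t else 0) * rr e s q t))"
        by (simp add: sum.distrib[symmetric] sum_distrib_left distrib_left mult_ac)
      also have "\<dots> = 0" using R1[OF e] R3[OF e, of "\<lambda>q t. if q then real t else 0"] by simp
      finally show "(\<Sum>e'\<in>E. KK e e' * cc e') = 0" .
    qed
    then have "cc 0 = 0" using ns' E0 unfolding nonsingular_on_def by blast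
    then show False unfolding cc_def by simp
  qed
  have Yinf_i: "integrable M (\<lambda>\<omega>. Yinf \<omega> t)" if "t \<in> {1..T}" for t
    using square_integrable_imp_integrable[OF _ Yinf_L2[rule_format, OF that]] Yinf_meas by blast
  have Yg_i: "integrable M (\<lambda>\<omega>. Yg g \<omega> t)" if "g \<in> trg" "t \<in> {1..T}" for g t
    using square_integrable_imp_integrable[OF _ Yg_L2[rule_format, OF that[unfolded trg_def]]] Yg_meas that
    unfolding trg_def by blast
  have Yrep: "Yobs SS S Q Yinf Yg \<omega> t = Yinf \<omega> t + (\<Sum>g\<in>trg. indicator (cell (enat g) True) \<omega> * (Yg g \<omega> t - Yinf \<omega> t))"
    if w: "\<omega> \<in> space M" for \<omega> t
  proof (cases "\<exists>g. S \<omega> = enat g \<and> g \<in> trg \<and> Q \<omega>")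
    case True
    then obtain g0 where g0: "S \<omega> = enat g0" "g0 \<in> trg" "Q \<omega>" by blast
    have "indicator (cell (enat g) True) \<omega> * (Yg g \<omega> t - Yinf \<omega> t) = (if g = g0 then Yg g \<omega> t - Yinf \<omega> t else 0)" for g
      using g0 w by (auto simp: cell_def indicator_def)
    then have "(\<Sum>g\<in>trg. indicator (cell (enat g) True) \<omega> * (Yg g \<omega> t - Yinf \<omega> t)) = Yg g0 \<omega> t - Yinf \<omega> t"
      using g0(2) trg_fin by (simp add: sum.delta')
    moreover have "Yobs SS S Q Yinf Yg \<omega> t = Yg g0 \<omega> t"
      using g0 unfolding Yobs_def trg_def by auto
    ultimately show ?thesis by simp
  next
    case False
    have "(\<Sum>g\<in>trg. indicator (cell (enat g) True) \<omega> * (Yg g \<omega> t - Yinf \<omega> t)) = 0"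
      using False w by (intro sum.neutral ballI) (auto simp: cell_def indicator_def)
    moreover have "Yobs SS S Q Yinf Yg \<omega> t = Yinf \<omega> t"
      using False unfolding Yobs_def trg_def by auto
    ultimately show ?thesis by simp
  qed
  have Yobs_m: "(\<lambda>\<omega>. Yobs SS S Q Yinf Yg \<omega> t) \<in> borel_measurable M" for t
  proof -
    have "(\<lambda>\<omega>. Yinf \<omega> t + (\<Sum>g\<in>trg. indicator (cell (enat g) True) \<omega> * (Yg g \<omega> t - Yinf \<omega> t))) \<in> borel_measurable M"
      using Yinf_meas Yg_meas unfolding trg_def
      by (intro borel_measurable_add borel_measurable_sum borel_measurable_times borel_measurable_diff borel_measurable_indicator cell_sets) auto
    then show ?thesis by (rule measurable_cong[THEN iffD1, rotated]) (simp add: Yrep)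
  qed
  have Yobs_L2: "integrable M (\<lambda>\<omega>. (Yobs SS S Q Yinf Yg \<omega> t)\<^sup>2)" if t: "t \<in> {1..T}" for t
  proof (rule Bochner_Integration.integrable_bound[where f="\<lambda>\<omega>. (Yinf \<omega> t)\<^sup>2 + (\<Sum>g\<in>trg. (Yg g \<omega> t)\<^sup>2)"])
    show "integrable M (\<lambda>\<omega>. (Yinf \<omega> t)\<^sup>2 + (\<Sum>g\<in>trg. (Yg g \<omega> t)\<^sup>2))"
      using Yinf_L2 Yg_L2 t unfolding trg_def by auto
    show "(\<lambda>\<omega>. (Yobs SS S Q Yinf Yg \<omega> t)\<^sup>2) \<in> borel_measurable M"
      using Yobs_m[of t] by measurable
    show "AE \<omega> in M. norm ((Yobs SS S Q Yinf Yg \<omega> t)\<^sup>2) \<le> norm ((Yinf \<omega> t)\<^sup>2 + (\<Sum>g\<in>trg. (Yg g \<omega> t)\<^sup>2))"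
    proof (rule AE_I2)
      fix \<omega> assume w: "\<omega> \<in> space M"
      have s0: "0 \<le> (\<Sum>g\<in>trg. (Yg g \<omega> t)\<^sup>2)" by (simp add: sum_nonneg)
      have "(Yobs SS S Q Yinf Yg \<omega> t)\<^sup>2 \<le> (Yinf \<omega> t)\<^sup>2 + (\<Sum>g\<in>trg. (Yg g \<omega> t)\<^sup>2)"
      proof (cases "(\<exists>g. S \<omega> = enat g \<and> g \<in> trg_groups SS) \<and> Q \<omega>")
        case True
        then obtain g0 where g0: "S \<omega> = enat g0" "g0 \<in> trg" using trg_def by blast
        have "(Yobs SS S Q Yinf Yg \<omega> t)\<^sup>2 = (Yg g0 \<omega> t)\<^sup>2" using True g0 unfolding Yobs_def by simp
        also have "\<dots> \<le> (\<Sum>g\<in>trg. (Yg g \<omega> t)\<^sup>2)" by (rule member_le_sum[OF g0(2)]) (auto simp: trg_fin)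
        finally show ?thesis by (smt (verit) zero_le_power2)
      next
        case False
        then have "Yobs SS S Q Yinf Yg \<omega> t = Yinf \<omega> t" unfolding Yobs_def by (rule if_not_P)
        then show ?thesis using s0 by simp
      qed
      then show "norm ((Yobs SS S Q Yinf Yg \<omega> t)\<^sup>2) \<le> norm ((Yinf \<omega> t)\<^sup>2 + (\<Sum>g\<in>trg. (Yg g \<omega> t)\<^sup>2))"
        using s0 by simp
    qed
  qed
  have Rgl_rep: "Rgl S Q g l \<omega> t = (\<lambda>s q. if s = enat g \<and> q \<and> int t = int g + l then 1 else 0) (S \<omega>) (Q \<omega>)" for g l \<omega> t
    unfolding Rgl_def by simp
  have Rgl_m: "(\<lambda>\<omega>. Rgl S Q g l \<omega> t) \<in> borel_measurable M" for g l t
    unfolding Rgl_rep by (rule cellfun_meas)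
  have Rgl_L2: "integrable M (\<lambda>\<omega>. (Rgl S Q g l \<omega> t)\<^sup>2)" for g l t
    using cellfun_integrable[of "\<lambda>_. 1" "\<lambda>s q. (if s = enat g \<and> q \<and> int t = int g + l then 1 else 0)\<^sup>2"]
    unfolding Rgl_rep by simp
  have eqY: "(\<integral>\<omega>. (\<Sum>t\<in>{1..T}. rr e (S \<omega>) (Q \<omega>) t * Yobs SS S Q Yinf Yg \<omega> t) \<partial>M)
      = (\<Sum>e'\<in>E. \<alpha> e' * KK e e')" if e: "e \<in> E" for e
  proof -
    obtain \<delta> \<eta> a where rd: "\<forall>s q t. rr e s q t = revc e s q t - \<delta> s t - \<eta> q t - a s q" using Rd[OF e] by blast
    show ?thesis unfolding KK_def
      by (rule main_lemma[OF finE e alpha[folded E_def] Yobs_m Yobs_L2 rd[rule_format] R1[OF e] R2[OF e] R3[OF e]])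
  qed
  have eqR: "(\<integral>\<omega>. (\<Sum>t\<in>{1..T}. rr e (S \<omega>) (Q \<omega>) t * Rgl S Q g l \<omega> t) \<partial>M)
      = (\<Sum>e'\<in>E. \<omega> g l e' * KK e e')" if e: "e \<in> E" and g: "g \<in> trg" and l: "l \<in> E" for e g l
  proof -
    obtain \<delta> \<eta> a where rd: "\<forall>s q t. rr e s q t = revc e s q t - \<delta> s t - \<eta> q t - a s q" using Rd[OF e] by blast
    have pc: "pop_coef M T E S Q (Rgl S Q g l) (\<omega> g l)" using omega g l unfolding trg_def E_def by blast
    show ?thesis unfolding KK_def
      by (rule main_lemma[OF finE e pc Rgl_m Rgl_L2 rd[rule_format] R1[OF e] R2[OF e] R3[OF e]])
  qed
  have dec: "(\<integral>\<omega>. (\<Sum>t\<in>{1..T}. rr e (S \<omega>) (Q \<omega>) t * Yobs SS S Q Yinf Yg \<omega> t) \<partial>M)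
      = (\<Sum>g\<in>trg. \<Sum>l\<in>E. CATT M S Q Yinf Yg g l * (\<integral>\<omega>. (\<Sum>t\<in>{1..T}. rr e (S \<omega>) (Q \<omega>) t * Rgl S Q g l \<omega> t) \<partial>M))"
    if e: "e \<in> E" for e
  proof -
    define r where "r = rr e"
    have pos: "p s q > 0" if "s \<in> SS" for s q
      using cells_pos that unfolding p_def cell_def by auto
    have cellT: "cell (enat g) True = {\<omega>\<in>space M. S \<omega> = enat g \<and> Q \<omega>}" for g
      unfolding cell_def by simp
    define m where "m s q t = (\<integral>\<omega>. indicator (cell s q) \<omega> * Yinf \<omega> t \<partial>M)" for s q t
    define \<mu> where "\<mu> s q t = m s q t / p s q" for s q t
    have pm: "p s q * \<mu> s q t = m s q t" if "s \<in> SS" for s q t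
      using pos[OF that, of q] unfolding \<mu>_def by simp
    have Dtr: "Dtrend M S Q Yinf t s q = \<mu> s q t - \<mu> s q (t - 1)" if "s \<in> SS" "t \<in> {2..T}" for s q t
    proof -
      have t1: "t \<in> {1..T}" "t - 1 \<in> {1..T}" using that by auto
      have "(\<integral>\<omega>. indicator {\<omega>. S \<omega> = s \<and> Q \<omega> = q} \<omega> * (Yinf \<omega> t - Yinf \<omega> (t - 1)) \<partial>M)
          = (\<integral>\<omega>. indicator (cell s q) \<omega> * Yinf \<omega> t - indicator (cell s q) \<omega> * Yinf \<omega> (t - 1) \<partial>M)"
        by (rule Bochner_Integration.integral_cong[OF refl]) (auto simp: cell_def indicator_def)
      also have "\<dots> = m s q t - m s q (t - 1)"
        unfolding m_def using cell_int_mult[OF Yinf_i[OF t1(1)]] cell_int_mult[OF Yinf_i[OF t1(2)]]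
        by (rule Bochner_Integration.integral_diff)
      finally show ?thesis
        unfolding Dtrend_def cond_mean_def \<mu>_def p_def cell_def by (simp add: diff_divide_distrib)
    qed
    define Dd where "Dd s t = \<mu> s True t - \<mu> s False t" for s t
    have Dstep: "Dd s t - Dd s (t - 1) = Dd \<infinity> t - Dd \<infinity> (t - 1)" if "s \<in> SS" "t \<in> {2..T}" for s t
    proof (cases s)
      case (enat g)
      have g: "g \<in> trg_groups SS" using that enat by (simp add: trg_groups_def)
      have "Dtrend M S Q Yinf t (enat g) True - Dtrend M S Q Yinf t (enat g) False
           = Dtrend M S Q Yinf t \<infinity> True - Dtrend M S Q Yinf t \<infinity> False"
        using ddd_pct g inf_in that(2) by auto
      then show ?thesis using Dtr[OF that(1) that(2)] Dtr[OF inf_in that(2)] enat unfolding Dd_def by simp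
    next
      case infinity then show ?thesis by simp
    qed
    have Dlev: "Dd s t - Dd \<infinity> t = Dd s 1 - Dd \<infinity> 1" if "s \<in> SS" "t \<in> {1..T}" for s t
      using that(2)
    proof (induction t)
      case 0 then show ?case by simp
    next
      case (Suc n)
      show ?case
      proof (cases "n = 0")
        case True then show ?thesis by simp
      next
        case False
        then have "n \<in> {1..T}" "Suc n \<in> {2..T}" using Suc.prems by auto
        then show ?thesis using Suc.IH Dstep[OF that(1), of "Suc n"] by simp
      qed
    qed
    have mu_dec: "\<mu> s q t = \<mu> s False t + (if q then Dd s 1 - Dd \<infinity> 1 else 0) + (if q then Dd \<infinity> t else 0)"
      if "s \<in> SS" "t \<in> {1..T}" for s q t
      using Dlev[OF that] unfolding Dd_def by (cases q) auto
    have Yinf_zero: "(\<integral>\<omega>. (\<Sum>t\<in>{1..T}. r (S \<omega>) (Q \<omega>) t * Yinf \<omega> t) \<partial>M) = 0"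
    proof -
      have "(\<integral>\<omega>. (\<Sum>t\<in>{1..T}. r (S \<omega>) (Q \<omega>) t * Yinf \<omega> t) \<partial>M)
          = (\<Sum>t\<in>{1..T}. \<integral>\<omega>. r (S \<omega>) (Q \<omega>) t * Yinf \<omega> t \<partial>M)"
        by (rule Bochner_Integration.integral_sum) (use cellfun_integrable[OF Yinf_i, of _ "\<lambda>s q. r s q t" for t] in auto)
      also have "\<dots> = (\<Sum>t\<in>{1..T}. \<Sum>s\<in>SS. \<Sum>q\<in>UNIV. r s q t * m s q t)"
        unfolding m_def by (intro sum.cong refl cellfun_integral[OF Yinf_i, of _ "\<lambda>s q. r s q t" for t, simplified]) auto
      also have "\<dots> = (\<Sum>s\<in>SS. \<Sum>q\<in>UNIV. \<Sum>t\<in>{1..T}. r s q t * m s q t)"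
      proof -
        have "(\<Sum>t\<in>{1..T}. \<Sum>s\<in>SS. \<Sum>q\<in>UNIV. r s q t * m s q t) = (\<Sum>s\<in>SS. \<Sum>t\<in>{1..T}. \<Sum>q\<in>UNIV. r s q t * m s q t)"
          by (rule sum.swap)
        also have "\<dots> = (\<Sum>s\<in>SS. \<Sum>q\<in>UNIV. \<Sum>t\<in>{1..T}. r s q t * m s q t)"
          by (rule sum.cong[OF refl], rule sum.swap)
        finally show ?thesis .
      qed
      also have "\<dots> = (\<Sum>s\<in>SS. \<Sum>q\<in>UNIV. p s q * (\<Sum>t\<in>{1..T}. \<mu> s False t * r s q t))
          + (\<Sum>s\<in>SS. \<Sum>q\<in>UNIV. p s q * (if q then Dd s 1 - Dd \<infinity> 1 else 0) * (\<Sum>t\<in>{1..T}. r s q t))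
          + (\<Sum>s\<in>SS. \<Sum>q\<in>UNIV. p s q * (\<Sum>t\<in>{1..T}. (if q then Dd \<infinity> t else 0) * r s q t))"
      proof -
        have "(\<Sum>t\<in>{1..T}. r s q t * m s q t) = p s q * (\<Sum>t\<in>{1..T}. \<mu> s False t * r s q t)
           + p s q * (if q then Dd s 1 - Dd \<infinity> 1 else 0) * (\<Sum>t\<in>{1..T}. r s q t)
           + p s q * (\<Sum>t\<in>{1..T}. (if q then Dd \<infinity> t else 0) * r s q t)" if s: "s \<in> SS" for s q
        proof -
          have "(\<Sum>t\<in>{1..T}. r s q t * m s q t) = (\<Sum>t\<in>{1..T}. p s q * (\<mu> s False t * r s q t)
             + p s q * (if q then Dd s 1 - Dd \<infinity> 1 else 0) * r s q t + p s q * ((if q then Dd \<infinity> t else 0) * r s q t))"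
          proof (rule sum.cong[OF refl])
            fix t assume t: "t \<in> {1..T}"
            show "r s q t * m s q t = p s q * (\<mu> s False t * r s q t)
             + p s q * (if q then Dd s 1 - Dd \<infinity> 1 else 0) * r s q t + p s q * ((if q then Dd \<infinity> t else 0) * r s q t)"
              unfolding pm[OF s, symmetric] mu_dec[OF s t, of q] by (simp add: algebra_simps)
          qed
          then show ?thesis by (simp add: sum.distrib sum_distrib_left)
        qed
        then show ?thesis by (simp add: sum.distrib)
      qed
      also have "\<dots> = 0"
        using R1[OF e] R2[OF e, of "\<lambda>s t. \<mu> s False t"] R3[OF e, of "\<lambda>q t. if q then Dd \<infinity> t else 0"]
        unfolding r_def by simp
      finally show ?thesis .
    qed
    have IY: "(\<integral>\<omega>. indicator (cell (enat g) True) \<omega> * (Yg g \<omega> t - Yinf \<omega> t) \<partial>M)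
        = p (enat g) True * CATT M S Q Yinf Yg g (int t - int g)" if g: "g \<in> trg" and t: "t \<in> {1..T}" for g t
    proof -
      have gS: "enat g \<in> SS" using g unfolding trg_def trg_groups_def by simp
      have nt: "nat (int g + (int t - int g)) = t" by simp
      have "(\<integral>\<omega>. indicator {\<omega>. S \<omega> = enat g \<and> Q \<omega>} \<omega> * (Yg g \<omega> t - Yinf \<omega> t) \<partial>M)
          = (\<integral>\<omega>. indicator (cell (enat g) True) \<omega> * (Yg g \<omega> t - Yinf \<omega> t) \<partial>M)"
        by (rule Bochner_Integration.integral_cong[OF refl]) (auto simp: cell_def indicator_def)
      moreover have "measure M {\<omega>\<in>space M. S \<omega> = enat g \<and> Q \<omega>} = p (enat g) True"
        unfolding p_def cell_def by simp
      ultimately show ?thesis using pos[OF gS, of True]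
        unfolding CATT_def cond_mean_def nt by simp
    qed
    have pw: "(\<Sum>t\<in>{1..T}. r (S \<omega>) (Q \<omega>) t * Yobs SS S Q Yinf Yg \<omega> t)
       = (\<Sum>t\<in>{1..T}. r (S \<omega>) (Q \<omega>) t * Yinf \<omega> t)
         + (\<Sum>g\<in>trg. \<Sum>t\<in>{1..T}. r (enat g) True t * (indicator (cell (enat g) True) \<omega> * (Yg g \<omega> t - Yinf \<omega> t)))"
      if w: "\<omega> \<in> space M" for \<omega>
    proof -
      have ind: "r (S \<omega>) (Q \<omega>) t * (indicator (cell (enat g) True) \<omega> * x) = r (enat g) True t * (indicator (cell (enat g) True) \<omega> * x)" for g t x
        using w by (auto simp: cell_def indicator_def)
      have "(\<Sum>t\<in>{1..T}. r (S \<omega>) (Q \<omega>) t * Yobs SS S Q Yinf Yg \<omega> t)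
         = (\<Sum>t\<in>{1..T}. r (S \<omega>) (Q \<omega>) t * Yinf \<omega> t
             + (\<Sum>g\<in>trg. r (enat g) True t * (indicator (cell (enat g) True) \<omega> * (Yg g \<omega> t - Yinf \<omega> t))))"
        by (intro sum.cong refl) (simp add: Yrep[OF w] distrib_left sum_distrib_left ind)
      also have "\<dots> = (\<Sum>t\<in>{1..T}. r (S \<omega>) (Q \<omega>) t * Yinf \<omega> t)
         + (\<Sum>t\<in>{1..T}. \<Sum>g\<in>trg. r (enat g) True t * (indicator (cell (enat g) True) \<omega> * (Yg g \<omega> t - Yinf \<omega> t)))"
        by (rule sum.distrib)
      also have "\<dots> = (\<Sum>t\<in>{1..T}. r (S \<omega>) (Q \<omega>) t * Yinf \<omega> t)
         + (\<Sum>g\<in>trg. \<Sum>t\<in>{1..T}. r (enat g) True t * (indicator (cell (enat g) True) \<omega> * (Yg g \<omega> t - Yinf \<omega> t)))"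
        by (subst sum.swap) (rule refl)
      finally show ?thesis .
    qed
    have iD: "integrable M (\<lambda>\<omega>. indicator (cell (enat g) True) \<omega> * (Yg g \<omega> t - Yinf \<omega> t))"
      if "g \<in> trg" "t \<in> {1..T}" for g t
      using cell_int_mult[OF Bochner_Integration.integrable_diff[OF Yg_i[OF that] Yinf_i[OF that(2)]]] .
    have i1: "integrable M (\<lambda>\<omega>. \<Sum>t\<in>{1..T}. r (S \<omega>) (Q \<omega>) t * Yinf \<omega> t)"
      using cellfun_integrable[OF Yinf_i, of _ "\<lambda>s q. r s q t" for t] by auto
    have i2: "integrable M (\<lambda>\<omega>. \<Sum>g\<in>trg. \<Sum>t\<in>{1..T}. r (enat g) True t * (indicator (cell (enat g) True) \<omega> * (Yg g \<omega> t - Yinf \<omega> t)))"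
      by (intro Bochner_Integration.integrable_sum integrable_mult_right iD) auto
    have LHS: "(\<integral>\<omega>. (\<Sum>t\<in>{1..T}. r (S \<omega>) (Q \<omega>) t * Yobs SS S Q Yinf Yg \<omega> t) \<partial>M)
        = (\<Sum>g\<in>trg. \<Sum>t\<in>{1..T}. r (enat g) True t * (p (enat g) True * CATT M S Q Yinf Yg g (int t - int g)))"
    proof -
      have "(\<integral>\<omega>. (\<Sum>t\<in>{1..T}. r (S \<omega>) (Q \<omega>) t * Yobs SS S Q Yinf Yg \<omega> t) \<partial>M)
         = (\<integral>\<omega>. (\<Sum>t\<in>{1..T}. r (S \<omega>) (Q \<omega>) t * Yinf \<omega> t)
         + (\<Sum>g\<in>trg. \<Sum>t\<in>{1..T}. r (enat g) True t * (indicator (cell (enat g) True) \<omega> * (Yg g \<omega> t - Yinf \<omega> t))) \<partial>M)"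
        by (rule Bochner_Integration.integral_cong[OF refl]) (rule pw)
      also have "\<dots> = (\<integral>\<omega>. (\<Sum>t\<in>{1..T}. r (S \<omega>) (Q \<omega>) t * Yinf \<omega> t) \<partial>M)
         + (\<integral>\<omega>. (\<Sum>g\<in>trg. \<Sum>t\<in>{1..T}. r (enat g) True t * (indicator (cell (enat g) True) \<omega> * (Yg g \<omega> t - Yinf \<omega> t))) \<partial>M)"
        using i1 i2 by (rule Bochner_Integration.integral_add)
      also have "(\<integral>\<omega>. (\<Sum>g\<in>trg. \<Sum>t\<in>{1..T}. r (enat g) True t * (indicator (cell (enat g) True) \<omega> * (Yg g \<omega> t - Yinf \<omega> t))) \<partial>M)
         = (\<Sum>g\<in>trg. \<Sum>t\<in>{1..T}. r (enat g) True t * (\<integral>\<omega>. indicator (cell (enat g) True) \<omega> * (Yg g \<omega> t - Yinf \<omega> t) \<partial>M))"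
      proof -
        have "(\<integral>\<omega>. (\<Sum>g\<in>trg. \<Sum>t\<in>{1..T}. r (enat g) True t * (indicator (cell (enat g) True) \<omega> * (Yg g \<omega> t - Yinf \<omega> t))) \<partial>M)
          = (\<Sum>g\<in>trg. \<integral>\<omega>. (\<Sum>t\<in>{1..T}. r (enat g) True t * (indicator (cell (enat g) True) \<omega> * (Yg g \<omega> t - Yinf \<omega> t))) \<partial>M)"
          by (rule Bochner_Integration.integral_sum) (intro Bochner_Integration.integrable_sum integrable_mult_right iD; simp)
        also have "\<dots> = (\<Sum>g\<in>trg. \<Sum>t\<in>{1..T}. \<integral>\<omega>. r (enat g) True t * (indicator (cell (enat g) True) \<omega> * (Yg g \<omega> t - Yinf \<omega> t)) \<partial>M)"
          by (intro sum.cong refl Bochner_Integration.integral_sum integrable_mult_right iD) auto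
        finally show ?thesis by simp
      qed
      finally show ?thesis using Yinf_zero IY by simp
    qed
    have IR: "(\<integral>\<omega>. (\<Sum>t\<in>{1..T}. r (S \<omega>) (Q \<omega>) t * Rgl S Q g l \<omega> t) \<partial>M)
        = p (enat g) True * (\<Sum>t\<in>{1..T}. r (enat g) True t * (if int t = int g + l then 1 else 0))" for g l
    proof -
      have "(\<integral>\<omega>. (\<Sum>t\<in>{1..T}. r (S \<omega>) (Q \<omega>) t * Rgl S Q g l \<omega> t) \<partial>M)
          = (\<integral>\<omega>. (\<Sum>t\<in>{1..T}. r (enat g) True t * (if int t = int g + l then 1 else 0)) * indicator (cell (enat g) True) \<omega> \<partial>M)"
      proof (rule Bochner_Integration.integral_cong[OF refl])
        fix \<omega> assume w: "\<omega> \<in> space M"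
        show "(\<Sum>t\<in>{1..T}. r (S \<omega>) (Q \<omega>) t * Rgl S Q g l \<omega> t)
           = (\<Sum>t\<in>{1..T}. r (enat g) True t * (if int t = int g + l then 1 else 0)) * indicator (cell (enat g) True) \<omega>"
          unfolding sum_distrib_right using w by (intro sum.cong refl) (auto simp: Rgl_def cell_def indicator_def)
      qed
      also have "\<dots> = (\<Sum>t\<in>{1..T}. r (enat g) True t * (if int t = int g + l then 1 else 0)) * p (enat g) True"
        unfolding p_def using cell_sets[of "enat g" True] by (simp add: cell_def Int_absorb2)
      finally show ?thesis by simp
    qed
    have RHS: "(\<Sum>g\<in>trg. \<Sum>l\<in>E. CATT M S Q Yinf Yg g l * (\<integral>\<omega>. (\<Sum>t\<in>{1..T}. r (S \<omega>) (Q \<omega>) t * Rgl S Q g l \<omega> t) \<partial>M))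
        = (\<Sum>g\<in>trg. \<Sum>t\<in>{1..T}. r (enat g) True t * (p (enat g) True * CATT M S Q Yinf Yg g (int t - int g)))"
    proof (rule sum.cong[OF refl])
      fix g assume g: "g \<in> trg"
      have gt: "- int L \<le> int t - int g \<and> int t - int g \<le> int K" if "t \<in> {1..T}" for t
        using window g that unfolding trg_def by blast
      have C0: "(if int t - int g \<in> E then CATT M S Q Yinf Yg g (int t - int g) else 0) = CATT M S Q Yinf Yg g (int t - int g)"
        if t: "t \<in> {1..T}" for t
      proof (cases "int t - int g \<in> E")
        case False
        then have tg: "int t - int g = -1" using gt[OF t] unfolding E_def ev_set_def by auto
        then have nt: "nat (int g + (int t - int g)) = t" by simp
        have "(\<integral>\<omega>. indicator {\<omega>. S \<omega> = enat g \<and> Q \<omega>} \<omega> * (Yg g \<omega> t - Yinf \<omega> t) \<partial>M) = (\<integral>\<omega>. 0 \<partial>M)"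
          using no_anticip g t tg unfolding trg_def
          by (intro Bochner_Integration.integral_cong refl) auto
        then have "CATT M S Q Yinf Yg g (int t - int g) = 0"
          unfolding CATT_def cond_mean_def nt by simp
        then show ?thesis by simp
      qed simp
      have "(\<Sum>l\<in>E. CATT M S Q Yinf Yg g l * (p (enat g) True * (\<Sum>t\<in>{1..T}. r (enat g) True t * (if int t = int g + l then 1 else 0))))
         = (\<Sum>l\<in>E. \<Sum>t\<in>{1..T}. r (enat g) True t * p (enat g) True * (if l = int t - int g then CATT M S Q Yinf Yg g l else 0))"
        by (intro sum.cong refl) (auto simp: sum_distrib_left intro!: sum.cong)
      also have "\<dots> = (\<Sum>t\<in>{1..T}. \<Sum>l\<in>E. r (enat g) True t * p (enat g) True * (if l = int t - int g then CATT M S Q Yinf Yg g l else 0))"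
        by (rule sum.swap)
      also have "\<dots> = (\<Sum>t\<in>{1..T}. r (enat g) True t * p (enat g) True * (if int t - int g \<in> E then CATT M S Q Yinf Yg g (int t - int g) else 0))"
        using finE by (simp add: sum_distrib_left[symmetric] sum.delta)
      also have "\<dots> = (\<Sum>t\<in>{1..T}. r (enat g) True t * (p (enat g) True * CATT M S Q Yinf Yg g (int t - int g)))"
        by (intro sum.cong refl) (simp add: C0)
      finally show "(\<Sum>l\<in>E. CATT M S Q Yinf Yg g l * (\<integral>\<omega>. (\<Sum>t\<in>{1..T}. r (S \<omega>) (Q \<omega>) t * Rgl S Q g l \<omega> t) \<partial>M))
         = (\<Sum>t\<in>{1..T}. r (enat g) True t * (p (enat g) True * CATT M S Q Yinf Yg g (int t - int g)))"
        unfolding IR .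
    qed
    show ?thesis using LHS RHS unfolding r_def by simp
  qed
  define c where "c e' = \<alpha> e' - (\<Sum>g\<in>trg. \<Sum>l\<in>E. \<omega> g l e' * CATT M S Q Yinf Yg g l)" for e'
  have "\<forall>e\<in>E. (\<Sum>e'\<in>E. KK e e' * c e') = 0"
  proof
    fix e assume e: "e \<in> E"
    have sw: "(\<Sum>e'\<in>E. \<Sum>g\<in>trg. \<Sum>l\<in>E. f e' g l) = (\<Sum>g\<in>trg. \<Sum>l\<in>E. \<Sum>e'\<in>E. f e' g l)" for f :: "int \<Rightarrow> nat \<Rightarrow> int \<Rightarrow> real"
    proof -
      have "(\<Sum>e'\<in>E. \<Sum>g\<in>trg. \<Sum>l\<in>E. f e' g l) = (\<Sum>g\<in>trg. \<Sum>e'\<in>E. \<Sum>l\<in>E. f e' g l)" by (rule sum.swap)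
      also have "\<dots> = (\<Sum>g\<in>trg. \<Sum>l\<in>E. \<Sum>e'\<in>E. f e' g l)" by (rule sum.cong[OF refl]) (rule sum.swap)
      finally show ?thesis .
    qed
    have "(\<Sum>e'\<in>E. KK e e' * c e') = (\<Sum>e'\<in>E. \<alpha> e' * KK e e' - (\<Sum>g\<in>trg. \<Sum>l\<in>E. CATT M S Q Yinf Yg g l * (\<omega> g l e' * KK e e')))"
      unfolding c_def by (intro sum.cong refl) (simp add: right_diff_distrib sum_distrib_left mult_ac)
    also have "\<dots> = (\<Sum>e'\<in>E. \<alpha> e' * KK e e') - (\<Sum>e'\<in>E. \<Sum>g\<in>trg. \<Sum>l\<in>E. CATT M S Q Yinf Yg g l * (\<omega> g l e' * KK e e'))"
      by (rule sum_subtractf)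
    also have "\<dots> = (\<Sum>e'\<in>E. \<alpha> e' * KK e e')
        - (\<Sum>g\<in>trg. \<Sum>l\<in>E. CATT M S Q Yinf Yg g l * (\<Sum>e'\<in>E. \<omega> g l e' * KK e e'))"
      unfolding sw by (simp only: sum_distrib_left)
    finally have "(\<Sum>e'\<in>E. KK e e' * c e') = (\<Sum>e'\<in>E. \<alpha> e' * KK e e')
        - (\<Sum>g\<in>trg. \<Sum>l\<in>E. CATT M S Q Yinf Yg g l * (\<Sum>e'\<in>E. \<omega> g l e' * KK e e'))" .
    also have "\<dots> = 0" using eqY[OF e] dec[OF e] eqR[OF e] by simp
    finally show "(\<Sum>e'\<in>E. KK e e' * c e') = 0" .
  qed
  then have "c j = 0" using ns' jE unfolding nonsingular_on_def by blast
  then show ?thesis unfolding c_def trg_def E_def by simp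
qed

end
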